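(* Let $n\ge2$, $\alpha\in(-n,0)$ and let $\phi$ be a Young function satisfying $\underline\Lambda_\phi(\alpha)<\infty$ and $\overline\Lambda_\phi(\alpha)<\infty$. (i) If $\Omega\subset\mathbb R^n$ is a bounded globally $n$-regular domain with constant $\theta$, then there exists a constant $C>0$ depending only on $n,\alpha,\phi,\theta$ such that $\|u-u_\Omega\|_{L^{n/|\alpha|}(\Omega)}\le C\|u\|_{\dot{\mathbf B}^{\alpha,\phi}(\Omega)}$ for all $u\in\dot{\mathbf B}^{\alpha,\phi}(\Omega)$. (ii) If $\Omega\subset\mathbb R^n$ is an unbounded globally $n$-regular domain with constant $\theta$, then there exists a constant $C>0$ depending only on $n,\alpha,\phi,\theta$ such that $\|u\|_{L^{n/|\alpha|}(\Omega)}\le C\|u\|_{\dot{\mathbf B}^{\alpha,\phi}(\Omega)}$ for all $u\in\dot{\mathbf B}^{\alpha,\phi}(\Omega)$ with $|\{x\in\Omega:|u(x)|>a\}|<\infty$ for all $a>0$.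
   Context: A Young function is $\phi\in C([0,\infty))$, convex, with $\phi(0)=0$, $\phi(t)>0$ for $t>0$, $\lim_{t\to\infty}\phi(t)=\infty$. $\underline\Lambda_\phi(\alpha):=\sup_{x>0}\int_0^1\frac{\phi(t^{1-\alpha}x)}{\phi(x)}\frac{dt}{t^{n+1}}$, $\overline\Lambda_\phi(\alpha):=\sup_{x>0}\int_1^\infty\frac{\phi(t^{-\alpha}x)}{\phi(x)}\frac{dt}{t^{n+1}}$. $\dot{\mathbf B}^{\alpha,\phi}(\Omega)$ is the space of measurable $u$ on $\Omega$ with finite $\|u\|_{\dot{\mathbf B}^{\alpha,\phi}(\Omega)}:=\inf\{\lambda>0:\int_\Omega\int_\Omega\phi(\frac{|u(x)-u(y)|}{\lambda|x-y|^{\alpha}})\frac{dx\,dy}{|x-y|^{2n}}\le1\}$. $u_\Omega$ is the average of $u$ over $\Omega$. A domain $\Omega$ is globally $n$-regular (with constant $\theta\in(0,1)$) if $|B(x,r)\cap\Omega|\ge\theta r^n$ for all $x\in\Omega$ and all $0<r<2\operatorname{diam}\Omega$. *)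

theory Defs
  imports "HOL-Analysis.Analysis"
begin

definition young_function :: "(real \<Rightarrow> real) \<Rightarrow> bool" where
  "young_function \<phi> \<longleftrightarrow>
     continuous_on {0..} \<phi> \<and> convex_on {0..} \<phi> \<and> \<phi> 0 = 0 \<and>
     (\<forall>t>0. \<phi> t > 0) \<and> filterlim \<phi> at_top at_top"

definition Lambda_lower :: "nat \<Rightarrow> (real \<Rightarrow> real) \<Rightarrow> real \<Rightarrow> ennreal" where
  "Lambda_lower n \<phi> \<alpha> = (SUP x\<in>{0<..}.
     \<integral>\<^sup>+ t\<in>{0<..<1}. ennreal (\<phi> (t powr (1 - \<alpha>) * x) / \<phi> x / t ^ (n + 1)) \<partial>lborel)"

definition Lambda_upper :: "nat \<Rightarrow> (real \<Rightarrow> real) \<Rightarrow> real \<Rightarrow> ennreal" where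
  "Lambda_upper n \<phi> \<alpha> = (SUP x\<in>{0<..}.
     \<integral>\<^sup>+ t\<in>{1<..}. ennreal (\<phi> (t powr (- \<alpha>) * x) / \<phi> x / t ^ (n + 1)) \<partial>lborel)"

text \<open>Besov-Orlicz modular and (Luxemburg-type) seminorm, valued in ennreal
  (the infimum of the empty set is infinity).\<close>
definition besov_modular ::
  "real \<Rightarrow> (real \<Rightarrow> real) \<Rightarrow> (real^'n) set \<Rightarrow> (real^'n \<Rightarrow> real) \<Rightarrow> real \<Rightarrow> ennreal" where
  "besov_modular \<alpha> \<phi> \<Omega> u s =
     (\<integral>\<^sup>+ x\<in>\<Omega>. (\<integral>\<^sup>+ y\<in>\<Omega>.
        ennreal (\<phi> (\<bar>u x - u y\<bar> / (s * dist x y powr \<alpha>)) / dist x y ^ (2 * CARD('n)))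
      \<partial>lebesgue) \<partial>lebesgue)"

definition besov_norm ::
  "real \<Rightarrow> (real \<Rightarrow> real) \<Rightarrow> (real^'n) set \<Rightarrow> (real^'n \<Rightarrow> real) \<Rightarrow> ennreal" where
  "besov_norm \<alpha> \<phi> \<Omega> u = Inf {ennreal s | s. s > 0 \<and> besov_modular \<alpha> \<phi> \<Omega> u s \<le> 1}"

definition besov_space ::
  "real \<Rightarrow> (real \<Rightarrow> real) \<Rightarrow> (real^'n) set \<Rightarrow> (real^'n \<Rightarrow> real) set" where
  "besov_space \<alpha> \<phi> \<Omega> =
     {u. u \<in> borel_measurable (lebesgue_on \<Omega>) \<and> besov_norm \<alpha> \<phi> \<Omega> u < \<infinity>}"

definition Lp_norm :: "real \<Rightarrow> (real^'n) set \<Rightarrow> (real^'n \<Rightarrow> real) \<Rightarrow> ennreal" where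
  "Lp_norm p \<Omega> f =
     (let I = (\<integral>\<^sup>+ x\<in>\<Omega>. ennreal (\<bar>f x\<bar> powr p) \<partial>lebesgue)
      in if I = \<infinity> then \<infinity> else ennreal (enn2real I powr (1 / p)))"

definition avg :: "(real^'n) set \<Rightarrow> (real^'n \<Rightarrow> real) \<Rightarrow> real" where
  "avg \<Omega> u = (\<integral>x\<in>\<Omega>. u x \<partial>lebesgue) / measure lebesgue \<Omega>"

definition domain :: "(real^'n) set \<Rightarrow> bool" where
  "domain \<Omega> \<longleftrightarrow> open \<Omega> \<and> connected \<Omega> \<and> \<Omega> \<noteq> {}"

text \<open>Global n-regularity; for unbounded \<Omega>, diam \<Omega> = \<infinity>, so all r > 0 are required.\<close>
definition globally_regular :: "real \<Rightarrow> (real^'n) set \<Rightarrow> bool" where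
  "globally_regular \<theta> \<Omega> \<longleftrightarrow> 0 < \<theta> \<and> \<theta> < 1 \<and>
     (\<forall>x\<in>\<Omega>. \<forall>r. 0 < r \<and> (\<not> bounded \<Omega> \<or> r < 2 * diameter \<Omega>) \<longrightarrow>
        emeasure lebesgue (ball x r \<inter> \<Omega>) \<ge> ennreal (\<theta> * r ^ CARD('n)))"

end

theory Submission
  imports Defs
begin


lemma phi_sub:
  assumes "young_function \<phi>" "0 \<le> \<tau>" "\<tau> \<le> 1" "0 \<le> z"
  shows "\<phi> (\<tau> * z) \<le> \<tau> * \<phi> z"
proof -
  have cv: "convex_on {0..} \<phi>" and z0: "\<phi> 0 = 0" using assms(1) unfolding young_function_def by auto
  have "\<phi> ((1 - \<tau>) *\<^sub>R 0 + \<tau> *\<^sub>R z) \<le> (1 - \<tau>) * \<phi> 0 + \<tau> * \<phi> z"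
    by (rule convex_onD[OF cv]) (use assms in auto)
  then show ?thesis using z0 by simp
qed

lemma phi_nonneg:
  assumes "young_function \<phi>" "0 \<le> z" shows "0 \<le> \<phi> z"
proof (cases "z = 0")
  case True then show ?thesis using assms unfolding young_function_def by auto
next
  case False then have "z > 0" using assms by simp
  then show ?thesis using assms unfolding young_function_def by (auto intro: less_imp_le)
qed

lemma phi_pos:
  assumes "young_function \<phi>" "0 < z" shows "0 < \<phi> z"
  using assms unfolding young_function_def by auto

lemma phi_mono:
  assumes "young_function \<phi>" "0 \<le> a" "a \<le> b" shows "\<phi> a \<le> \<phi> b"
proof (cases "b = 0")
  case True then show ?thesis using assms by simp
next
  case False
  then have b: "b > 0" using assms by simp
  have "\<phi> ((a/b) * b) \<le> (a/b) * \<phi> b"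
    by (rule phi_sub[OF assms(1)]) (use assms b in auto)
  also have "\<dots> \<le> 1 * \<phi> b" using phi_pos[OF assms(1) b] assms b
    by (intro mult_right_mono) auto
  finally show ?thesis using b by simp
qed

lemma phi_super:
  assumes "young_function \<phi>" "1 \<le> \<sigma>" "0 \<le> y"
  shows "\<sigma> * \<phi> y \<le> \<phi> (\<sigma> * y)"
proof -
  have "\<phi> ((1/\<sigma>) * (\<sigma> * y)) \<le> (1/\<sigma>) * \<phi> (\<sigma> * y)"
    by (rule phi_sub[OF assms(1)]) (use assms in auto)
  then show ?thesis using assms(2) by (simp add: field_simps)
qed

lemma upper_type:
  fixes \<phi> :: "real \<Rightarrow> real"
  assumes yf: "young_function \<phi>" and a: "\<alpha> < 0" and L: "Lambda_upper n \<phi> \<alpha> < \<infinity>"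
    and x: "0 < x" and mu: "1 \<le> \<mu>"
  shows "\<phi> (\<mu> * x) \<le> 2 ^ (n+1) * enn2real (Lambda_upper n \<phi> \<alpha>) * \<mu> powr (real n / (-\<alpha>)) * \<phi> x"
proof -
  define \<beta> where "\<beta> = - \<alpha>"
  have b: "\<beta> > 0" using a by (simp add: \<beta>_def)
  define A where "A = \<mu> powr (1/\<beta>)"
  have A1: "1 \<le> A" unfolding A_def using mu b by (simp add: ge_one_powr_ge_zero)
  have phx: "\<phi> x > 0" using phi_pos[OF yf x] .
  define K where "K = \<phi> (\<mu> * x) / \<phi> x / (2*A) ^ (n+1)"
  have K0: "K \<ge> 0" unfolding K_def using phx phi_nonneg[OF yf, of "\<mu>*x"] mu x A1 by simp
  have "ennreal (K * A) = (\<integral>\<^sup>+ t. ennreal K * indicator {A<..<2*A} t \<partial>lborel)"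
    using A1 K0 by (subst nn_integral_cmult_indicator) (auto simp: ennreal_mult')
  also have "\<dots> \<le> (\<integral>\<^sup>+ t\<in>{1<..}. ennreal (\<phi> (t powr (- \<alpha>) * x) / \<phi> x / t ^ (n + 1)) \<partial>lborel)"
  proof (rule nn_integral_mono)
    fix t
    show "ennreal K * indicator {A<..<2*A} t \<le> ennreal (\<phi> (t powr (- \<alpha>) * x) / \<phi> x / t ^ (n + 1)) * indicator {1<..} t"
    proof (cases "t \<in> {A<..<2*A}")
      case True
      then have t: "A < t" "t < 2*A" by auto
      have t1: "1 < t" using t A1 by simp
      have "\<mu> = A powr \<beta>" unfolding A_def using b mu by (simp add: powr_powr)
      also have "\<dots> \<le> t powr \<beta>" using t A1 b by (intro powr_mono2) auto
      finally have "\<mu> * x \<le> t powr (-\<alpha>) * x" using x by (simp add: \<beta>_def)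
      then have p: "\<phi> (\<mu> * x) \<le> \<phi> (t powr (-\<alpha>) * x)" using phi_mono[OF yf] mu x by simp
      have q: "t ^ (n+1) \<le> (2*A) ^ (n+1)" using t t1 by (intro power_mono) auto
      have "K \<le> \<phi> (t powr (- \<alpha>) * x) / \<phi> x / t ^ (n + 1)"
        unfolding K_def using p q phx t1 phi_nonneg[OF yf, of "\<mu>*x"] mu x
        by (intro frac_le divide_right_mono) auto
      then show ?thesis using True t1 by (simp add: ennreal_leI)
    qed simp
  qed
  also have "\<dots> \<le> Lambda_upper n \<phi> \<alpha>" unfolding Lambda_upper_def
    by (rule SUP_upper) (use x in auto)
  finally have le: "ennreal (K * A) \<le> Lambda_upper n \<phi> \<alpha>" .
  have "K * A \<le> enn2real (Lambda_upper n \<phi> \<alpha>)"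
  proof -
    have L': "Lambda_upper n \<phi> \<alpha> < top" using L by simp
    show ?thesis using enn2real_mono[OF le L'] K0 A1 by simp
  qed
  have eq: "\<phi> (\<mu> * x) = (K * A) * 2 ^ (n+1) * A ^ n * \<phi> x"
    unfolding K_def using phx A1 by (simp add: field_simps power_mult_distrib)
  have An: "A ^ n = \<mu> powr (real n / (-\<alpha>))"
    unfolding A_def using mu b by (simp add: powr_realpow[symmetric] powr_powr \<beta>_def)
  have "\<phi> (\<mu> * x) \<le> enn2real (Lambda_upper n \<phi> \<alpha>) * 2 ^ (n+1) * A ^ n * \<phi> x"
    unfolding eq using \<open>K * A \<le> _\<close> phx A1 by (intro mult_right_mono) auto
  then show ?thesis using An by (simp add: ac_simps)
qed


lemma emeasure_split_le:
  assumes "A \<in> sets lebesgue" "E \<in> sets lebesgue"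
  shows "emeasure lebesgue A \<le> emeasure lebesgue (A - E) + emeasure lebesgue E"
proof -
  have "emeasure lebesgue A \<le> emeasure lebesgue ((A - E) \<union> E)"
    using assms by (intro emeasure_mono) auto
  also have "\<dots> \<le> emeasure lebesgue (A - E) + emeasure lebesgue E"
    using assms by (intro emeasure_subadditive) auto
  finally show ?thesis .
qed

lemma ennreal_cancel_aux:
  fixes a b c :: ennreal
  shows "a + c \<le> b + c \<Longrightarrow> c < top \<Longrightarrow> a \<le> b"
  by (simp add: order_less_le)

lemma lemmaA:
  fixes \<Omega> E :: "(real^'n) set" and x :: "real^'n" and g :: "real^'n \<Rightarrow> real"
  assumes yf: "young_function \<phi>"
    and \<Omega>m: "\<Omega> \<in> sets lebesgue" and Em: "E \<in> sets lebesgue"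
    and reg: "\<forall>r>0. ennreal (\<theta> * r ^ CARD('n)) \<le> emeasure lebesgue (ball x r \<inter> \<Omega>) \<or> \<Omega> \<subseteq> ball x r"
    and e: "0 < e" "emeasure lebesgue E \<le> ennreal e"
    and half: "\<forall>r>0. \<Omega> \<subseteq> ball x r \<longrightarrow> ennreal (2*e) \<le> emeasure lebesgue \<Omega>"
    and th: "0 < \<theta>" and b: "0 < \<beta>" and l: "0 < lam"
    and g: "\<forall>y\<in>\<Omega>-E. lam \<le> g y"
  shows "ennreal (\<theta>^2/32 * \<phi> (lam * (e / (2 * unit_ball_vol (real CARD('n)))) powr (\<beta> / CARD('n))) / e)
    \<le> (\<integral>\<^sup>+y\<in>\<Omega>-E. ennreal (\<phi> (g y * dist x y powr \<beta>) / dist x y ^ (2 * CARD('n))) \<partial>lebesgue)"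
proof -
  define n where "n = CARD('n)"
  have n1: "n \<ge> 1" unfolding n_def by (simp add: Suc_leI)
  define \<omega> where "\<omega> = unit_ball_vol (real n)"
  have \<omega>: "\<omega> > 0" unfolding \<omega>_def by simp
  define r where "r = (4*e/\<theta>) powr (1/n)"
  define \<rho> where "\<rho> = (e/(2*\<omega>)) powr (1/n)"
  have r0: "r > 0" unfolding r_def using e th by simp
  have \<rho>0: "\<rho> > 0" unfolding \<rho>_def using e \<omega> by simp
  have rn: "r ^ n = 4*e/\<theta>" unfolding r_def using e th n1
    by (simp add: powr_realpow[symmetric] powr_powr)
  have \<rho>n: "\<rho> ^ n = e/(2*\<omega>)" unfolding \<rho>_def using e \<omega> n1
    by (simp add: powr_realpow[symmetric] powr_powr)
  have \<rho>b: "\<rho> powr \<beta> = (e / (2 * \<omega>)) powr (\<beta> / n)" unfolding \<rho>_def using e \<omega>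
    by (simp add: powr_powr)
  have ball_meas: "emeasure lebesgue (ball x \<rho>) = ennreal (e/2)"
  proof -
    have "unit_ball_vol (real CARD('n)) \<noteq> 0" by (metis unit_ball_vol_pos of_nat_0_le_iff less_irrefl)
    then show ?thesis using \<rho>n \<rho>0 unfolding n_def \<omega>_def by (simp add: emeasure_ball)
  qed
  define B where "B = ball x r \<inter> \<Omega> - E"
  define S where "S = B - ball x \<rho>"
  have Bm: "B \<in> sets lebesgue" unfolding B_def using \<Omega>m Em
    by (intro sets.Diff sets.Int) (auto intro: fmeasurableD)
  have Sm: "S \<in> sets lebesgue" unfolding S_def using Bm
    by (intro sets.Diff) (auto intro: fmeasurableD)
  have EB: "ennreal e \<le> emeasure lebesgue B"
  proof (cases "ennreal (\<theta> * r ^ CARD('n)) \<le> emeasure lebesgue (ball x r \<inter> \<Omega>)")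
    case True
    have "ennreal (3*e) + ennreal e = ennreal (\<theta> * r ^ CARD('n))"
      using rn th e by (simp add: n_def flip: ennreal_plus)
    also have "\<dots> \<le> emeasure lebesgue (ball x r \<inter> \<Omega>)" by fact
    also have "\<dots> \<le> emeasure lebesgue B + emeasure lebesgue E"
      unfolding B_def using \<Omega>m Em by (intro emeasure_split_le sets.Int) (auto intro: fmeasurableD)
    also have "\<dots> \<le> emeasure lebesgue B + ennreal e" using e by (intro add_left_mono) auto
    finally have "ennreal (3*e) \<le> emeasure lebesgue B" by (rule ennreal_cancel_aux) simp
    moreover have "ennreal e \<le> ennreal (3*e)" using e by simp
    ultimately show ?thesis by simp
  next
    case False
    then have sub: "\<Omega> \<subseteq> ball x r" using reg r0 by auto
    then have eq: "ball x r \<inter> \<Omega> = \<Omega>" by auto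
    have "ennreal e + ennreal e = ennreal (2*e)" using e by (simp flip: ennreal_plus)
    also have "\<dots> \<le> emeasure lebesgue \<Omega>" using half sub r0 by auto
    also have "\<dots> \<le> emeasure lebesgue B + emeasure lebesgue E"
      unfolding B_def eq using \<Omega>m Em by (intro emeasure_split_le) auto
    also have "\<dots> \<le> emeasure lebesgue B + ennreal e" using e by (intro add_left_mono) auto
    finally show "ennreal e \<le> emeasure lebesgue B" by (rule ennreal_cancel_aux) simp
  qed
  have ES: "ennreal (e/2) \<le> emeasure lebesgue S"
  proof -
    have "ennreal (e/2) + ennreal (e/2) = ennreal e" using e by (simp flip: ennreal_plus)
    also have "\<dots> \<le> emeasure lebesgue B" by fact
    also have "\<dots> \<le> emeasure lebesgue S + emeasure lebesgue (ball x \<rho>)"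
      unfolding S_def using Bm by (intro emeasure_split_le) (auto intro: fmeasurableD)
    also have "\<dots> = emeasure lebesgue S + ennreal (e/2)" using ball_meas by simp
    finally show ?thesis by (rule ennreal_cancel_aux) simp
  qed
  define c0 where "c0 = \<phi> (lam * \<rho> powr \<beta>) / r ^ (2*n)"
  have c00: "c0 \<ge> 0" unfolding c0_def using phi_nonneg[OF yf, of "lam * \<rho> powr \<beta>"] l by simp
  have "ennreal (\<theta>^2/32 * \<phi> (lam * (e / (2 * \<omega>)) powr (\<beta> / n)) / e) = ennreal c0 * ennreal (e/2)"
  proof -
    have R: "r ^ (2*n) = 16*e^2/\<theta>^2" using rn by (simp add: power_mult mult.commute[of 2 n] power_divide)
    have "c0 * (e/2) = \<theta>^2/32 * \<phi> (lam * (e / (2 * \<omega>)) powr (\<beta> / n)) / e"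
      unfolding c0_def \<rho>b R using e th by (simp add: field_simps power2_eq_square)
    then show ?thesis using c00 e by (simp flip: ennreal_mult)
  qed
  also have "\<dots> \<le> ennreal c0 * emeasure lebesgue S" using ES by (intro mult_left_mono) auto
  also have "\<dots> = (\<integral>\<^sup>+y. ennreal c0 * indicator S y \<partial>lebesgue)"
    using Sm by (simp add: nn_integral_cmult_indicator)
  also have "\<dots> \<le> (\<integral>\<^sup>+y\<in>\<Omega>-E. ennreal (\<phi> (g y * dist x y powr \<beta>) / dist x y ^ (2 * n)) \<partial>lebesgue)"
  proof (rule nn_integral_mono)
    fix y
    show "ennreal c0 * indicator S y \<le> ennreal (\<phi> (g y * dist x y powr \<beta>) / dist x y ^ (2 * n)) * indicator (\<Omega>-E) y"
    proof (cases "y \<in> S")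
      case True
      then have y: "y \<in> \<Omega> - E" "\<rho> \<le> dist x y" "dist x y < r" unfolding S_def B_def by auto
      have d0: "dist x y > 0" using y(2) \<rho>0 by linarith
      have gy: "lam \<le> g y" using g y by auto
      have "lam * \<rho> powr \<beta> \<le> g y * dist x y powr \<beta>"
        using gy y \<rho>0 b l by (intro mult_mono powr_mono2) auto
      then have p: "\<phi> (lam * \<rho> powr \<beta>) \<le> \<phi> (g y * dist x y powr \<beta>)"
        using phi_mono[OF yf] l \<rho>0 by simp
      have q: "dist x y ^ (2*n) \<le> r ^ (2*n)" using y d0 by (intro power_mono) auto
      have "c0 \<le> \<phi> (g y * dist x y powr \<beta>) / dist x y ^ (2 * n)"
        unfolding c0_def using p q d0 phi_nonneg[OF yf, of "lam * \<rho> powr \<beta>"] l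
        by (intro frac_le) auto
      then show ?thesis using True y by (simp add: ennreal_leI)
    qed simp
  qed
  finally show ?thesis unfolding n_def \<omega>_def .
qed



lemma step_real:
  fixes \<psi> :: "real \<Rightarrow> real"
  assumes q: "1 \<le> q" and c: "0 < c" and Cu: "0 < Cu"
    and psi_pos: "\<And>t. 0 < t \<Longrightarrow> 0 < \<psi> t"
    and psi_small: "\<And>t. 0 < t \<Longrightarrow> t \<le> 1 \<Longrightarrow> \<psi> 1 \<le> Cu * (1/t) * \<psi> t"
    and psi_large: "\<And>t. 1 \<le> t \<Longrightarrow> t powr (1/q) * \<psi> 1 \<le> \<psi> t"
    and T: "T = max 1 (max (2 powr q * Cu / (c * \<psi> 1)) ((2 powr q / (c * \<psi> 1)) powr q))"
    and a1: "0 \<le> a1" and a2: "0 < a2" and l: "0 < l"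
    and W: "a1 * c * \<psi> ((l/2) powr q * a2) / a2 \<le> 1"
    and tau: "(l/2) powr q * a2 \<le> T"
  shows "l powr q * a1 \<le> T"
proof -
  define \<tau> where "\<tau> = (l/2) powr q * a2"
  have tau0: "\<tau> > 0" unfolding \<tau>_def using l a2 by simp
  have ps: "\<psi> \<tau> > 0" using psi_pos tau0 by simp
  have p1: "\<psi> 1 > 0" using psi_pos by simp
  have "a1 \<le> a2 / (c * \<psi> \<tau>)" using W ps c a2 unfolding \<tau>_def[symmetric]
    by (simp add: field_simps)
  then have "l powr q * a1 \<le> l powr q * (a2 / (c * \<psi> \<tau>))" using l by (intro mult_left_mono) auto
  also have "l powr q * (a2 / (c * \<psi> \<tau>)) = 2 powr q / c * (\<tau> / \<psi> \<tau>)"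
  proof -
    have lq: "l powr q = 2 powr q * (l/2) powr q" using l by (simp add: powr_divide)
    show ?thesis unfolding lq by (simp add: \<tau>_def)
  qed
  finally have main: "l powr q * a1 \<le> 2 powr q / c * (\<tau> / \<psi> \<tau>)" .
  show ?thesis
  proof (cases "\<tau> \<le> 1")
    case True
    have "\<psi> 1 \<le> Cu * (1/\<tau>) * \<psi> \<tau>" using psi_small tau0 True by simp
    then have "\<tau> / \<psi> \<tau> \<le> Cu / \<psi> 1" using tau0 ps p1 by (simp add: field_simps)
    then have "2 powr q / c * (\<tau> / \<psi> \<tau>) \<le> 2 powr q / c * (Cu / \<psi> 1)" using c
      by (intro mult_left_mono) auto
    also have "\<dots> \<le> T" unfolding T by (simp add: field_simps)
    finally show ?thesis using main by simp
  next
    case False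
    define C2 where "C2 = 2 powr q / (c * \<psi> 1)"
    have C20: "C2 > 0" unfolding C2_def using c p1 by simp
    have "\<tau> powr (1/q) * \<psi> 1 \<le> \<psi> \<tau>" using psi_large False by simp
    then have "\<tau> / \<psi> \<tau> \<le> \<tau> / (\<tau> powr (1/q) * \<psi> 1)" using tau0 p1 ps
      by (intro divide_left_mono) auto
    also have "\<tau> / (\<tau> powr (1/q) * \<psi> 1) = \<tau> powr (1 - 1/q) / \<psi> 1"
      using tau0 by (simp add: powr_diff)
    finally have "2 powr q / c * (\<tau> / \<psi> \<tau>) \<le> 2 powr q / c * (\<tau> powr (1 - 1/q) / \<psi> 1)" using c
      by (intro mult_left_mono) auto
    also have "\<dots> = C2 * \<tau> powr (1 - 1/q)" unfolding C2_def by simp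
    also have "\<dots> \<le> C2 * T powr (1 - 1/q)" using tau tau0 q C20 unfolding \<tau>_def[symmetric]
      by (intro mult_left_mono powr_mono2) auto
    also have "C2 \<le> T powr (1/q)"
    proof -
      have "C2 powr q \<le> T" unfolding T C2_def by simp
      then have "(C2 powr q) powr (1/q) \<le> T powr (1/q)" using C20 q by (intro powr_mono2) auto
      then show ?thesis using C20 q by (simp add: powr_powr)
    qed
    then have "C2 * T powr (1 - 1/q) \<le> T powr (1/q) * T powr (1 - 1/q)" by (intro mult_right_mono) auto
    also have "\<dots> = T" using T by (simp add: powr_add[symmetric])
    finally show ?thesis using main by simp
  qed
qed

definition psiF :: "(real \<Rightarrow> real) \<Rightarrow> nat \<Rightarrow> real \<Rightarrow> real \<Rightarrow> real" where
  "psiF \<phi> n \<beta> t = \<phi> ((t / (2 * unit_ball_vol (real n))) powr (\<beta> / real n))"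

definition Tc :: "(real \<Rightarrow> real) \<Rightarrow> nat \<Rightarrow> real \<Rightarrow> real \<Rightarrow> real \<Rightarrow> real" where
  "Tc \<phi> n \<beta> \<theta> Cu = max 1 (max (2 powr (real n / \<beta>) * Cu / (\<theta>^2/32 * psiF \<phi> n \<beta> 1))
      ((2 powr (real n / \<beta>) / (\<theta>^2/32 * psiF \<phi> n \<beta> 1)) powr (real n / \<beta>)))"

definition K0c :: "(real \<Rightarrow> real) \<Rightarrow> nat \<Rightarrow> real \<Rightarrow> real \<Rightarrow> real \<Rightarrow> real" where
  "K0c \<phi> n \<beta> \<theta> Cu = 2 powr (real n / \<beta>) * Cu * Tc \<phi> n \<beta> \<theta> Cu / (\<theta>^2/32 * psiF \<phi> n \<beta> (Tc \<phi> n \<beta> \<theta> Cu))"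

lemma psi_props:
  assumes yf: "young_function \<phi>" and b: "0 < \<beta>" and n: "1 \<le> n" and Cu: "0 < Cu"
    and ut: "\<forall>x>0. \<forall>\<mu>\<ge>1. \<phi> (\<mu> * x) \<le> Cu * \<mu> powr (real n / \<beta>) * \<phi> x"
  shows "\<And>t. 0 < t \<Longrightarrow> 0 < psiF \<phi> n \<beta> t"
    and "\<And>t T'. 0 < t \<Longrightarrow> t \<le> T' \<Longrightarrow> psiF \<phi> n \<beta> T' \<le> Cu * (T'/t) * psiF \<phi> n \<beta> t"
    and "\<And>t. 1 \<le> t \<Longrightarrow> t powr (\<beta> / real n) * psiF \<phi> n \<beta> 1 \<le> psiF \<phi> n \<beta> t"
proof -
  define \<omega> where "\<omega> = unit_ball_vol (real n)"
  have \<omega>: "\<omega> > 0" unfolding \<omega>_def by simp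
  have \<omega>': "unit_ball_vol (real n) \<noteq> 0" by (metis unit_ball_vol_pos of_nat_0_le_iff less_irrefl)
  show "\<And>t. 0 < t \<Longrightarrow> 0 < psiF \<phi> n \<beta> t"
    unfolding psiF_def using \<omega> \<omega>' by (intro phi_pos[OF yf]) (simp add: \<omega>_def)
  show "psiF \<phi> n \<beta> T' \<le> Cu * (T'/t) * psiF \<phi> n \<beta> t" if t: "0 < t" "t \<le> T'" for t T'
  proof -
    define x where "x = (t / (2 * \<omega>)) powr (\<beta> / real n)"
    define \<mu> where "\<mu> = (T'/t) powr (\<beta> / real n)"
    have x0: "x > 0" unfolding x_def using t \<omega> by simp
    have mu1: "\<mu> \<ge> 1" unfolding \<mu>_def using t b n by (intro ge_one_powr_ge_zero) auto
    have mx: "\<mu> * x = (T' / (2 * \<omega>)) powr (\<beta> / real n)"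
      unfolding \<mu>_def x_def using t \<omega> by (simp add: powr_mult[symmetric])
    have mq: "\<mu> powr (real n / \<beta>) = T'/t"
      unfolding \<mu>_def using t b n by (simp add: powr_powr)
    have "\<phi> (\<mu> * x) \<le> Cu * \<mu> powr (real n / \<beta>) * \<phi> x" using ut x0 mu1 by blast
    then show ?thesis unfolding psiF_def using mx mq by (simp add: x_def \<omega>_def)
  qed
  show "t powr (\<beta> / real n) * psiF \<phi> n \<beta> 1 \<le> psiF \<phi> n \<beta> t" if t: "1 \<le> t" for t
  proof -
    have "t powr (\<beta> / real n) * \<phi> ((1 / (2 * \<omega>)) powr (\<beta> / real n))
        \<le> \<phi> (t powr (\<beta> / real n) * (1 / (2 * \<omega>)) powr (\<beta> / real n))"
      using t b n \<omega> by (intro phi_super[OF yf] ge_one_powr_ge_zero) auto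
    also have "t powr (\<beta> / real n) * (1 / (2 * \<omega>)) powr (\<beta> / real n) = (t / (2 * \<omega>)) powr (\<beta> / real n)"
      using t \<omega> by (simp add: powr_mult[symmetric])
    finally show ?thesis unfolding psiF_def \<omega>_def .
  qed
qed

lemma conv_psi:
  assumes "0 < l" "0 < e" "0 < \<beta>" "1 \<le> n" "0 < \<omega>"
  shows "l * (e / (2 * \<omega>)) powr (\<beta> / real n) = ((l powr (real n / \<beta>) * e) / (2 * \<omega>)) powr (\<beta> / real n)"
proof -
  have "((l powr (real n / \<beta>) * e) / (2 * \<omega>)) powr (\<beta> / real n)
      = (l powr (real n / \<beta>)) powr (\<beta> / real n) * (e / (2 * \<omega>)) powr (\<beta> / real n)"
  proof -
    have "(l powr (real n / \<beta>) * e) / (2 * \<omega>) = l powr (real n / \<beta>) * (e / (2 * \<omega>))" by simp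
    then show ?thesis using assms by (simp only: powr_mult[symmetric])
  qed
  also have "(l powr (real n / \<beta>)) powr (\<beta> / real n) = l" using assms by (simp add: powr_powr)
  finally show ?thesis by simp
qed

lemma core:
  fixes \<Omega> :: "(real^'n) set" and v :: "real^'n \<Rightarrow> real"
  assumes yf: "young_function \<phi>" and b: "0 < \<beta>" and bn: "\<beta> \<le> real CARD('n)"
    and Cu: "0 < Cu" and ut: "\<forall>x>0. \<forall>\<mu>\<ge>1. \<phi> (\<mu> * x) \<le> Cu * \<mu> powr (real CARD('n) / \<beta>) * \<phi> x"
    and th: "0 < \<theta>"
    and \<Omega>m: "\<Omega> \<in> sets lebesgue"
    and reg: "\<forall>x\<in>\<Omega>. \<forall>r>0. ennreal (\<theta> * r ^ CARD('n)) \<le> emeasure lebesgue (ball x r \<inter> \<Omega>) \<or> \<Omega> \<subseteq> ball x r"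
    and pos: "0 < emeasure lebesgue \<Omega>"
    and vm: "\<forall>l. {x\<in>\<Omega>. l < v x} \<in> sets lebesgue"
    and A0: "0 \<le> A" and A: "\<forall>l>0. emeasure lebesgue {x\<in>\<Omega>. l < v x} \<le> ennreal A"
    and half: "\<forall>l>0. \<forall>x\<in>\<Omega>. \<forall>r>0. \<Omega> \<subseteq> ball x r \<longrightarrow> 2 * emeasure lebesgue {x\<in>\<Omega>. l < v x} \<le> emeasure lebesgue \<Omega>"
    and M: "(\<integral>\<^sup>+x\<in>\<Omega>. (\<integral>\<^sup>+y\<in>\<Omega>. ennreal (\<phi> (\<bar>v x - v y\<bar> * dist x y powr \<beta>) / dist x y ^ (2 * CARD('n))) \<partial>lebesgue) \<partial>lebesgue) \<le> 1"
  shows "\<forall>x\<in>\<Omega>. 0 < v x \<longrightarrow> ennreal (v x powr (real CARD('n) / \<beta>))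
     \<le> ennreal (K0c \<phi> CARD('n) \<beta> \<theta> Cu) * (\<integral>\<^sup>+y\<in>\<Omega>. ennreal (\<phi> (\<bar>v x - v y\<bar> * dist x y powr \<beta>) / dist x y ^ (2 * CARD('n))) \<partial>lebesgue)"
proof -
  define n where "n = CARD('n)"
  have n1: "1 \<le> n" unfolding n_def by (simp add: Suc_leI)
  define q where "q = real n / \<beta>"
  have q1: "1 \<le> q" unfolding q_def using b bn by (simp add: n_def)
  define \<psi> where "\<psi> = psiF \<phi> n \<beta>"
  define c where "c = \<theta>^2/32"
  have c0: "c > 0" unfolding c_def using th by simp
  define \<omega> where "\<omega> = unit_ball_vol (real n)"
  have \<omega>: "\<omega> > 0" unfolding \<omega>_def by simp
  define T where "T = Tc \<phi> n \<beta> \<theta> Cu"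
  have T1: "1 \<le> T" unfolding T_def Tc_def by simp
  define F where "F x = (\<integral>\<^sup>+y\<in>\<Omega>. ennreal (\<phi> (\<bar>v x - v y\<bar> * dist x y powr \<beta>) / dist x y ^ (2 * n)) \<partial>lebesgue)" for x
  have ut': "\<forall>x>0. \<forall>\<mu>\<ge>1. \<phi> (\<mu> * x) \<le> Cu * \<mu> powr (real n / \<beta>) * \<phi> x" using ut by (simp add: n_def)
  note P = psi_props[OF yf b n1 Cu ut', folded \<psi>_def]
  define a where "a l = measure lebesgue {x\<in>\<Omega>. l < v x}" for l
  have aE: "emeasure lebesgue {x\<in>\<Omega>. l < v x} = ennreal (a l)" if "l > 0" for l
    unfolding a_def using A that by (intro emeasure_eq_ennreal_measure) (auto simp: top_unique)
  have a0: "0 \<le> a l" for l unfolding a_def by simp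
  have amono: "a l' \<le> a l" if "0 < l" "l \<le> l'" for l l'
  proof -
    have "emeasure lebesgue {x\<in>\<Omega>. l' < v x} \<le> emeasure lebesgue {x\<in>\<Omega>. l < v x}"
      using that vm by (intro emeasure_mono) auto
    then show ?thesis using aE that a0[of l] by (simp add: ennreal_le_iff)
  qed
  have hA: "ennreal (2 * a l) \<le> emeasure lebesgue \<Omega>" if "0 < l" "x \<in> \<Omega>" "0 < r" "\<Omega> \<subseteq> ball x r" for l x r
  proof -
    have "2 * emeasure lebesgue {x\<in>\<Omega>. l < v x} \<le> emeasure lebesgue \<Omega>"
      using half that by blast
    moreover have "ennreal (2 * a l) = 2 * emeasure lebesgue {x\<in>\<Omega>. l < v x}"
      using aE[OF that(1)] a0[of l] by (simp add: ennreal_mult)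
    ultimately show ?thesis by simp
  qed
  have aA: "a l \<le> A" if "l > 0" for l using A aE that A0 by auto
  have LA: "ennreal (c * \<psi> (l powr q * e) / e) \<le> F x"
    if x: "x \<in> \<Omega>" and l: "0 < l" and lv: "2*l \<le> v x" and e: "0 < e" and ale: "a l \<le> e"
      and hf: "\<forall>r>0. \<Omega> \<subseteq> ball x r \<longrightarrow> ennreal (2*e) \<le> emeasure lebesgue \<Omega>" for x l e
  proof -
    define E where "E = {x\<in>\<Omega>. l < v x}"
    have Em: "E \<in> sets lebesgue" unfolding E_def using vm by simp
    have "ennreal (\<theta>^2/32 * \<phi> (l * (e / (2 * unit_ball_vol (real CARD('n)))) powr (\<beta> / CARD('n))) / e)
      \<le> (\<integral>\<^sup>+y\<in>\<Omega>-E. ennreal (\<phi> (\<bar>v x - v y\<bar> * dist x y powr \<beta>) / dist x y ^ (2 * CARD('n))) \<partial>lebesgue)"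
    proof (rule lemmaA[OF yf \<Omega>m Em _ e(1) _ _ th b l])
      show "\<forall>r>0. ennreal (\<theta> * r ^ CARD('n)) \<le> emeasure lebesgue (ball x r \<inter> \<Omega>) \<or> \<Omega> \<subseteq> ball x r"
        using reg x by auto
      show "emeasure lebesgue E \<le> ennreal e" unfolding E_def using aE[OF l] ale by (simp add: ennreal_leI)
      show "\<forall>r>0. \<Omega> \<subseteq> ball x r \<longrightarrow> ennreal (2 * e) \<le> emeasure lebesgue \<Omega>" using hf by simp
      show "\<forall>y\<in>\<Omega> - E. l \<le> \<bar>v x - v y\<bar>" unfolding E_def using lv by auto
    qed
    also have "\<dots> \<le> F x" unfolding F_def n_def
      by (intro nn_integral_mono) (auto split: split_indicator)
    finally have 1: "ennreal (\<theta>^2/32 * \<phi> (l * (e / (2 * unit_ball_vol (real CARD('n)))) powr (\<beta> / CARD('n))) / e) \<le> F x" .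
    have "l * (e / (2 * unit_ball_vol (real CARD('n)))) powr (\<beta> / CARD('n))
        = ((l powr q * e) / (2 * \<omega>)) powr (\<beta> / real n)"
      unfolding q_def \<omega>_def n_def by (rule conv_psi) (use l e b n1 \<omega> in \<open>auto simp: n_def \<omega>_def\<close>)
    then show ?thesis using 1 unfolding \<psi>_def psiF_def c_def \<omega>_def by simp
  qed
  have W: "a l * c * \<psi> ((l/2) powr q * a (l/2)) / a (l/2) \<le> 1" if l: "0 < l" and ap: "0 < a (l/2)" for l
  proof -
    define K where "K = c * \<psi> ((l/2) powr q * a (l/2)) / a (l/2)"
    have K0: "K \<ge> 0" unfolding K_def using c0 P(1)[of "(l/2) powr q * a (l/2)"] ap l by simp
    define X where "X = {x\<in>\<Omega>. l < v x}"
    have Xm: "X \<in> sets lebesgue" unfolding X_def using vm by simp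
    have "ennreal (K * a l) = ennreal K * emeasure lebesgue X" unfolding X_def
      using aE[OF l] K0 a0 by (simp add: ennreal_mult)
    also have "\<dots> = (\<integral>\<^sup>+x. ennreal K * indicator X x \<partial>lebesgue)"
      using Xm by (simp add: nn_integral_cmult_indicator)
    also have "\<dots> \<le> (\<integral>\<^sup>+x\<in>\<Omega>. F x \<partial>lebesgue)"
    proof (rule nn_integral_mono)
      fix x
      show "ennreal K * indicator X x \<le> F x * indicator \<Omega> x"
      proof (cases "x \<in> X")
        case True
        then have x: "x \<in> \<Omega>" "l < v x" unfolding X_def by auto
        have "ennreal K \<le> F x" unfolding K_def
        proof (rule LA[OF x(1)])
          show "0 < l/2" using l by simp
          show "2 * (l/2) \<le> v x" using x by simp
          show "0 < a (l/2)" by fact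
          show "a (l/2) \<le> a (l/2)" by simp
          show "\<forall>r>0. \<Omega> \<subseteq> ball x r \<longrightarrow> ennreal (2 * a (l/2)) \<le> emeasure lebesgue \<Omega>"
            using hA[of "l/2" x] l x by simp
        qed
        then show ?thesis using True x by simp
      qed simp
    qed
    also have "\<dots> \<le> 1" using M unfolding F_def n_def .
    finally have "K * a l \<le> 1" by (simp add: ennreal_le_1)
    then show ?thesis unfolding K_def by (simp add: field_simps)
  qed
  have Tdef: "T = max 1 (max (2 powr q * Cu / (c * \<psi> 1)) ((2 powr q / (c * \<psi> 1)) powr q))"
    unfolding T_def Tc_def q_def c_def \<psi>_def ..
  have P2': "\<psi> 1 \<le> Cu * (1 / t) * \<psi> t" if "0 < t" "t \<le> 1" for t
    using P(2)[OF that] by simp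
  have P3': "t powr (1 / q) * \<psi> 1 \<le> \<psi> t" if "1 \<le> t" for t
    using P(3)[OF that] by (simp add: q_def)
  have ind: "\<forall>l>0. (l / 2^N) powr q * A \<le> 1 \<longrightarrow> l powr q * a l \<le> T" for N
  proof (induction N)
    case 0
    show ?case
    proof (intro allI impI)
      fix l :: real assume l: "0 < l" "(l / 2^0) powr q * A \<le> 1"
      have "l powr q * a l \<le> l powr q * A" using aA[OF l(1)] by (intro mult_left_mono) auto
      moreover have "l powr q * A \<le> 1" using l(2) by simp
      ultimately show "l powr q * a l \<le> T" using T1 by linarith
    qed
  next
    case (Suc N)
    show ?case
    proof (intro allI impI)
      fix l :: real assume l: "0 < l" "(l / 2^Suc N) powr q * A \<le> 1"
      have "((l/2) / 2^N) powr q * A \<le> 1" using l by (simp add: field_simps)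
      then have IH: "(l/2) powr q * a (l/2) \<le> T" using Suc l by simp
      show "l powr q * a l \<le> T"
      proof (cases "a (l/2) = 0")
        case True
        then have "a l = 0" using amono[of "l/2" l] a0[of l] l by simp
        then show ?thesis using T1 by simp
      next
        case False
        then have ap: "0 < a (l/2)" using a0[of "l/2"] by simp
        show ?thesis
          by (rule step_real[OF q1 c0 Cu P(1) P2' P3' Tdef a0 ap l(1) W[OF l(1) ap] IH])
      qed
    qed
  qed
  have weak: "l powr q * a l \<le> T" if l: "0 < l" for l
  proof -
    obtain N where N: "l * (A+1) < 2^N" using real_arch_pow[of 2 "l * (A+1)"] by auto
    have lN: "l / 2^N < 1 / (A+1)" using N A0 by (simp add: field_simps)
    have lN1: "l / 2^N \<le> 1" using lN A0 by (smt (verit) divide_le_eq_1_pos)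
    have "(l / 2^N) powr q \<le> (l / 2^N) powr 1" using q1 l lN1 by (intro powr_mono') auto
    then have "(l / 2^N) powr q \<le> 1 / (A+1)" using lN l by simp
    then have "(l / 2^N) powr q * A \<le> 1 / (A+1) * A" using A0 by (intro mult_right_mono) auto
    also have "\<dots> \<le> 1" using A0 by (simp add: field_simps)
    finally show ?thesis using ind l by blast
  qed
  show ?thesis
  proof (intro ballI impI)
    fix x assume x: "x \<in> \<Omega>" and vx: "0 < v x"
    define l where "l = v x / 2"
    have l: "0 < l" "2 * l \<le> v x" unfolding l_def using vx by auto
    obtain e where e: "0 < e" "a l \<le> e" "l powr q * e \<le> T"
      and hf: "\<forall>r>0. \<Omega> \<subseteq> ball x r \<longrightarrow> ennreal (2*e) \<le> emeasure lebesgue \<Omega>"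
    proof (cases "a l = 0")
      case False
      then have ap: "0 < a l" using a0[of l] by simp
      show ?thesis
      proof (rule that[OF ap order.refl weak[OF l(1)]])
        show "\<forall>r>0. \<Omega> \<subseteq> ball x r \<longrightarrow> ennreal (2 * a l) \<le> emeasure lebesgue \<Omega>"
          using hA[of l x] l x by simp
      qed
    next
      case True
      obtain e0 where e0: "0 < e0" "ennreal (2*e0) \<le> emeasure lebesgue \<Omega>"
      proof (cases "emeasure lebesgue \<Omega> = \<infinity>")
        case True then show ?thesis using that[of 1] by simp
      next
        case False
        then have "emeasure lebesgue \<Omega> = ennreal (measure lebesgue \<Omega>)"
          by (simp add: emeasure_eq_ennreal_measure)
        then have m0: "0 < measure lebesgue \<Omega>" using pos by (simp add: ennreal_less_zero_iff)
        show ?thesis using that[of "measure lebesgue \<Omega> / 2"] m0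
          \<open>emeasure lebesgue \<Omega> = ennreal (measure lebesgue \<Omega>)\<close> by simp
      qed
      define e where "e = min e0 (T / l powr q)"
      have "0 < e" unfolding e_def using e0 T1 l by simp
      moreover have "a l \<le> e" using True \<open>0 < e\<close> by simp
      moreover have "l powr q * e \<le> T" unfolding e_def using l
        by (simp add: min_def field_simps)
      moreover have "\<forall>r>0. \<Omega> \<subseteq> ball x r \<longrightarrow> ennreal (2*e) \<le> emeasure lebesgue \<Omega>"
        using e0 unfolding e_def by (auto intro: order.trans[rotated] ennreal_leI)
      ultimately show ?thesis using that by blast
    qed
    define t where "t = l powr q * e"
    have t0: "0 < t" unfolding t_def using l e by simp
    have "\<psi> T \<le> Cu * (T / t) * \<psi> t" using P(2)[OF t0] e unfolding t_def by simp
    then have key: "\<psi> T * l powr q / (Cu * T) \<le> \<psi> t / e"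
      using t0 e Cu T1 l unfolding t_def by (simp add: field_simps)
    have psT: "\<psi> T > 0" using P(1) T1 by simp
    define K0 where "K0 = K0c \<phi> CARD('n) \<beta> \<theta> Cu"
    have K0eq: "K0 = 2 powr q * Cu * T / (c * \<psi> T)"
      unfolding K0_def K0c_def T_def c_def \<psi>_def q_def n_def ..
    have K00: "K0 > 0" unfolding K0eq using Cu T1 c0 psT by simp
    have "v x powr q = 2 powr q * l powr q" unfolding l_def using vx by (simp add: powr_divide)
    also have "\<dots> = K0 * (c * (\<psi> T * l powr q / (Cu * T)))"
      unfolding K0eq using Cu T1 c0 psT by (simp add: field_simps)
    also have "\<dots> \<le> K0 * (c * (\<psi> t / e))" using key K00 c0 by (intro mult_left_mono) auto
    finally have vle: "v x powr q \<le> K0 * (c * \<psi> t / e)" by simp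
    have X0: "0 \<le> c * \<psi> t / e" using c0 P(1)[OF t0] e by simp
    have "ennreal (v x powr q) \<le> ennreal (K0 * (c * \<psi> t / e))" using vle by (rule ennreal_leI)
    also have "\<dots> = ennreal K0 * ennreal (c * \<psi> t / e)" using K00 X0 by (rule ennreal_mult[OF less_imp_le])
    also have "\<dots> \<le> ennreal K0 * F x" unfolding t_def
      by (intro mult_left_mono LA[OF x l(1) l(2) e(1) e(2) hf]) auto
    finally show "ennreal (v x powr (real CARD('n) / \<beta>)) \<le> ennreal (K0c \<phi> CARD('n) \<beta> \<theta> Cu) *
      (\<integral>\<^sup>+y\<in>\<Omega>. ennreal (\<phi> (\<bar>v x - v y\<bar> * dist x y powr \<beta>) / dist x y ^ (2 * CARD('n))) \<partial>lebesgue)"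
      unfolding F_def K0_def q_def n_def .
  qed
qed



lemma lev_meas:
  fixes f :: "real^'n \<Rightarrow> real"
  assumes "\<Omega> \<in> sets lebesgue" "f \<in> borel_measurable (lebesgue_on \<Omega>)"
  shows "{x\<in>\<Omega>. l < f x} \<in> sets lebesgue"
proof -
  have "{x \<in> space (lebesgue_on \<Omega>). l < f x} \<in> sets (lebesgue_on \<Omega>)"
    using assms(2) by measurable
  then show ?thesis using assms(1) by (simp add: sets_restrict_space_iff)
qed

lemma modular_eq:
  fixes u :: "real^'n \<Rightarrow> real"
  assumes s: "0 < s"
  shows "besov_modular \<alpha> \<phi> \<Omega> u s = (\<integral>\<^sup>+x\<in>\<Omega>. (\<integral>\<^sup>+y\<in>\<Omega>.
     ennreal (\<phi> (\<bar>u x / s - u y / s\<bar> * dist x y powr (-\<alpha>)) / dist x y ^ (2 * CARD('n))) \<partial>lebesgue) \<partial>lebesgue)"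
proof -
  have "\<bar>u x - u y\<bar> / (s * dist x y powr \<alpha>) = \<bar>u x / s - u y / s\<bar> * dist x y powr (-\<alpha>)" for x y :: "real^'n"
  proof (cases "x = y")
    case True then show ?thesis by simp
  next
    case False
    then have d: "dist x y > 0" by simp
    have "\<bar>u x / s - u y / s\<bar> = \<bar>u x - u y\<bar> / s" using s by (simp add: diff_divide_distrib[symmetric])
    then show ?thesis using d s by (simp add: powr_minus divide_simps)
  qed
  then show ?thesis unfolding besov_modular_def by simp
qed

definition Fw :: "real \<Rightarrow> (real \<Rightarrow> real) \<Rightarrow> (real^'n) set \<Rightarrow> (real^'n \<Rightarrow> real) \<Rightarrow> real^'n \<Rightarrow> ennreal" where
  "Fw \<beta> \<phi> \<Omega> w x = (\<integral>\<^sup>+y\<in>\<Omega>. ennreal (\<phi> (\<bar>w x - w y\<bar> * dist x y powr \<beta>) / dist x y ^ (2 * CARD('n))) \<partial>lebesgue)"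

lemma Fw_mono:
  assumes yf: "young_function \<phi>" and b: "0 < \<beta>" and le: "\<And>y. y \<in> \<Omega> \<Longrightarrow> \<bar>v x - v y\<bar> \<le> \<bar>w x - w y\<bar>"
  shows "Fw \<beta> \<phi> \<Omega> v x \<le> Fw \<beta> \<phi> \<Omega> w x"
  unfolding Fw_def
proof (intro nn_integral_mono)
  fix y
  show "ennreal (\<phi> (\<bar>v x - v y\<bar> * dist x y powr \<beta>) / dist x y ^ (2 * CARD('n))) * indicator \<Omega> y
    \<le> ennreal (\<phi> (\<bar>w x - w y\<bar> * dist x y powr \<beta>) / dist x y ^ (2 * CARD('n))) * indicator \<Omega> y"
  proof (cases "y \<in> \<Omega>")
    case True
    have "\<phi> (\<bar>v x - v y\<bar> * dist x y powr \<beta>) \<le> \<phi> (\<bar>w x - w y\<bar> * dist x y powr \<beta>)"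
      using le[OF True] by (intro phi_mono[OF yf] mult_right_mono) auto
    then show ?thesis using True by (auto intro!: ennreal_leI divide_right_mono)
  qed simp
qed

lemma core_w:
  fixes \<Omega> :: "(real^'n) set" and w :: "real^'n \<Rightarrow> real"
  assumes yf: "young_function \<phi>" and b: "0 < \<beta>" and bn: "\<beta> \<le> real CARD('n)"
    and Cu: "0 < Cu" and ut: "\<forall>x>0. \<forall>\<mu>\<ge>1. \<phi> (\<mu> * x) \<le> Cu * \<mu> powr (real CARD('n) / \<beta>) * \<phi> x"
    and th: "0 < \<theta>"
    and \<Omega>m: "\<Omega> \<in> sets lebesgue"
    and reg: "\<forall>x\<in>\<Omega>. \<forall>r>0. ennreal (\<theta> * r ^ CARD('n)) \<le> emeasure lebesgue (ball x r \<inter> \<Omega>) \<or> \<Omega> \<subseteq> ball x r"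
    and pos: "0 < emeasure lebesgue \<Omega>"
    and wm: "w \<in> borel_measurable (lebesgue_on \<Omega>)"
    and \<sigma>: "\<sigma> = 1 \<or> \<sigma> = -1"
    and A0: "0 \<le> A" and A: "\<forall>l>0. emeasure lebesgue {x\<in>\<Omega>. c + l < \<sigma> * w x} \<le> ennreal A"
    and half: "\<forall>l>0. \<forall>x\<in>\<Omega>. \<forall>r>0. \<Omega> \<subseteq> ball x r \<longrightarrow> 2 * emeasure lebesgue {x\<in>\<Omega>. c + l < \<sigma> * w x} \<le> emeasure lebesgue \<Omega>"
    and M: "(\<integral>\<^sup>+x\<in>\<Omega>. Fw \<beta> \<phi> \<Omega> w x \<partial>lebesgue) \<le> 1"
  shows "\<forall>x\<in>\<Omega>. c < \<sigma> * w x \<longrightarrow> ennreal ((\<sigma> * w x - c) powr (real CARD('n) / \<beta>))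
     \<le> ennreal (K0c \<phi> CARD('n) \<beta> \<theta> Cu) * Fw \<beta> \<phi> \<Omega> w x"
proof -
  define v where "v x = max (\<sigma> * w x - c) 0" for x
  have lip: "\<bar>v x - v y\<bar> \<le> \<bar>w x - w y\<bar>" for x y
  proof -
    have "\<bar>v x - v y\<bar> \<le> \<bar>\<sigma> * w x - \<sigma> * w y\<bar>" unfolding v_def by (simp add: max_def abs_if)
    also have "\<dots> = \<bar>w x - w y\<bar>" using \<sigma> by (auto simp: abs_minus_commute)
    finally show ?thesis .
  qed
  have lev: "{x\<in>\<Omega>. l < v x} = {x\<in>\<Omega>. c + l < \<sigma> * w x}" if "0 < l" for l
    unfolding v_def using that by auto
  have vmeas: "v \<in> borel_measurable (lebesgue_on \<Omega>)" unfolding v_def using wm by measurable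
  have vm: "\<forall>l. {x\<in>\<Omega>. l < v x} \<in> sets lebesgue" using lev_meas[OF \<Omega>m vmeas] by blast
  have Fle: "Fw \<beta> \<phi> \<Omega> v x \<le> Fw \<beta> \<phi> \<Omega> w x" for x by (rule Fw_mono[OF yf b lip])
  have Mv: "(\<integral>\<^sup>+x\<in>\<Omega>. Fw \<beta> \<phi> \<Omega> v x \<partial>lebesgue) \<le> 1"
  proof -
    have "(\<integral>\<^sup>+x\<in>\<Omega>. Fw \<beta> \<phi> \<Omega> v x \<partial>lebesgue) \<le> (\<integral>\<^sup>+x\<in>\<Omega>. Fw \<beta> \<phi> \<Omega> w x \<partial>lebesgue)"
      using Fle by (intro nn_integral_mono) (auto intro: mult_right_mono)
    then show ?thesis using M by simp
  qed
  have C: "\<forall>x\<in>\<Omega>. 0 < v x \<longrightarrow> ennreal (v x powr (real CARD('n) / \<beta>))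
     \<le> ennreal (K0c \<phi> CARD('n) \<beta> \<theta> Cu) * Fw \<beta> \<phi> \<Omega> v x"
    unfolding Fw_def
  proof (rule core[OF yf b bn Cu ut th \<Omega>m reg pos vm A0])
    show "\<forall>l>0. emeasure lebesgue {x \<in> \<Omega>. l < v x} \<le> ennreal A" using A lev by simp
    show "\<forall>l>0. \<forall>x\<in>\<Omega>. \<forall>r>0. \<Omega> \<subseteq> ball x r \<longrightarrow> 2 * emeasure lebesgue {x \<in> \<Omega>. l < v x} \<le> emeasure lebesgue \<Omega>"
      using half lev by simp
    show "(\<integral>\<^sup>+x\<in>\<Omega>. (\<integral>\<^sup>+y\<in>\<Omega>. ennreal (\<phi> (\<bar>v x - v y\<bar> * dist x y powr \<beta>) / dist x y ^ (2 * CARD('n))) \<partial>lebesgue) \<partial>lebesgue) \<le> 1"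
      using Mv unfolding Fw_def .
  qed
  show ?thesis
  proof (intro ballI impI)
    fix x assume x: "x \<in> \<Omega>" "c < \<sigma> * w x"
    then have vx: "v x = \<sigma> * w x - c" "0 < v x" unfolding v_def by auto
    have "ennreal ((\<sigma> * w x - c) powr (real CARD('n) / \<beta>)) \<le> ennreal (K0c \<phi> CARD('n) \<beta> \<theta> Cu) * Fw \<beta> \<phi> \<Omega> v x"
      using C x vx by metis
    also have "\<dots> \<le> ennreal (K0c \<phi> CARD('n) \<beta> \<theta> Cu) * Fw \<beta> \<phi> \<Omega> w x"
      by (intro mult_left_mono Fle) auto
    finally show "ennreal ((\<sigma> * w x - c) powr (real CARD('n) / \<beta>)) \<le> ennreal (K0c \<phi> CARD('n) \<beta> \<theta> Cu) * Fw \<beta> \<phi> \<Omega> w x" .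
  qed
qed



lemma median:
  fixes f :: "real^'n \<Rightarrow> real"
  assumes \<Omega>m: "\<Omega> \<in> sets lebesgue" and fin: "emeasure lebesgue \<Omega> < \<infinity>"
    and fm: "f \<in> borel_measurable (lebesgue_on \<Omega>)"
  shows "\<exists>m. \<forall>l>0. 2 * emeasure lebesgue {x\<in>\<Omega>. m + l < f x} \<le> emeasure lebesgue \<Omega>
      \<and> 2 * emeasure lebesgue {x\<in>\<Omega>. - m + l < - f x} \<le> emeasure lebesgue \<Omega>"
proof -
  have m1: "{x\<in>\<Omega>. l < f x} \<in> sets lebesgue" for l using lev_meas[OF \<Omega>m fm] .
  have fm': "(\<lambda>x. - f x) \<in> borel_measurable (lebesgue_on \<Omega>)" using fm by measurable
  have m2: "{x\<in>\<Omega>. l < - f x} \<in> sets lebesgue" for l using lev_meas[OF \<Omega>m fm'] .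
  have m3: "{x\<in>\<Omega>. f x \<le> l} \<in> sets lebesgue" for l
  proof -
    have "{x\<in>\<Omega>. f x \<le> l} = \<Omega> - {x\<in>\<Omega>. l < f x}" by auto
    then show ?thesis using \<Omega>m m1 by auto
  qed
  have finS: "emeasure lebesgue S \<noteq> \<infinity>" if "S \<subseteq> \<Omega>" "S \<in> sets lebesgue" for S
    using emeasure_mono[OF that(1) \<Omega>m] fin by (auto simp: top_unique)
  have fmS: "S \<in> fmeasurable lebesgue" if "S \<subseteq> \<Omega>" "S \<in> sets lebesgue" for S
    using finS[OF that] that(2) by (simp add: fmeasurable_def less_top)
  have eS: "emeasure lebesgue S = ennreal (measure lebesgue S)" if "S \<subseteq> \<Omega>" "S \<in> sets lebesgue" for S
    using finS[OF that] by (simp add: emeasure_eq_ennreal_measure)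
  define Wr where "Wr = measure lebesgue \<Omega>"
  have eW: "emeasure lebesgue \<Omega> = ennreal Wr" unfolding Wr_def using eS[OF order.refl \<Omega>m] .
  have key: "2 * emeasure lebesgue S \<le> emeasure lebesgue \<Omega>"
    if "S \<subseteq> \<Omega>" "S \<in> sets lebesgue" "2 * measure lebesgue S \<le> Wr" for S
  proof -
    have "2 * emeasure lebesgue S = ennreal (2 * measure lebesgue S)"
      using eS[OF that(1,2)] by (simp add: ennreal_mult)
    then show ?thesis using eW that(3) by (simp add: ennreal_leI)
  qed
  show ?thesis
  proof (cases "Wr = 0")
    case True
    show ?thesis
    proof (intro exI allI impI conjI)
      fix l :: real
      show "2 * emeasure lebesgue {x\<in>\<Omega>. 0 + l < f x} \<le> emeasure lebesgue \<Omega>"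
        using True measure_mono_fmeasurable[of "{x\<in>\<Omega>. 0 + l < f x}" \<Omega> lebesgue] m1 \<Omega>m fin
        by (intro key) (auto simp: Wr_def fmeasurable_def)
      show "2 * emeasure lebesgue {x\<in>\<Omega>. - 0 + l < - f x} \<le> emeasure lebesgue \<Omega>"
        using True measure_mono_fmeasurable[of "{x\<in>\<Omega>. - 0 + l < - f x}" \<Omega> lebesgue] m2 \<Omega>m fin
        by (intro key) (auto simp: Wr_def fmeasurable_def)
    qed
  next
    case False
    then have W0: "Wr > 0" unfolding Wr_def by (simp add: zero_less_measure_iff)
    define g where "g l = measure lebesgue {x\<in>\<Omega>. l < f x}" for l
    have gmono: "g l' \<le> g l" if "l \<le> l'" for l l'
      unfolding g_def using that m1 \<Omega>m fin
      by (intro measure_mono_fmeasurable fmS) auto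
    have compl: "measure lebesgue {x\<in>\<Omega>. f x \<le> l} = Wr - g l" for l
    proof -
      have "{x\<in>\<Omega>. f x \<le> l} = \<Omega> - {x\<in>\<Omega>. l < f x}" by auto
      then show ?thesis unfolding g_def Wr_def using \<Omega>m m1 fin
        by (simp add: measure_Diff)
    qed
    have lim1: "(\<lambda>k. g (real k)) \<longlonglongrightarrow> 0"
    proof -
      have "(\<lambda>k. measure lebesgue {x\<in>\<Omega>. real k < f x}) \<longlonglongrightarrow> measure lebesgue (\<Inter>k. {x\<in>\<Omega>. real k < f x})"
        using m1 by (intro Lim_measure_decseq finS) (auto simp: decseq_def)
      moreover have "(\<Inter>k. {x\<in>\<Omega>. real k < f x}) = {}"
      proof (safe)
        fix x assume "x \<in> (\<Inter>k. {x\<in>\<Omega>. real k < f x})"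
        then have "real k < f x" for k by blast
        moreover obtain k where "f x < real k" using reals_Archimedean2 by blast
        ultimately show "x \<in> {}" by (meson less_asym)
      qed
      ultimately show ?thesis unfolding g_def by simp
    qed
    have lim2: "(\<lambda>k. measure lebesgue {x\<in>\<Omega>. f x \<le> - real k}) \<longlonglongrightarrow> 0"
    proof -
      have "(\<lambda>k. measure lebesgue {x\<in>\<Omega>. f x \<le> - real k}) \<longlonglongrightarrow> measure lebesgue (\<Inter>k. {x\<in>\<Omega>. f x \<le> - real k})"
        using m3 by (intro Lim_measure_decseq finS) (auto simp: decseq_def)
      moreover have "(\<Inter>k. {x\<in>\<Omega>. f x \<le> - real k}) = {}"
      proof (safe)
        fix x assume "x \<in> (\<Inter>k. {x\<in>\<Omega>. f x \<le> - real k})"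
        then have "f x \<le> - real k" for k by blast
        moreover obtain k where "- f x < real k" using reals_Archimedean2 by blast
        ultimately show "x \<in> {}" by (metis minus_less_iff not_le)
      qed
      ultimately show ?thesis by simp
    qed
    obtain k1 where k1: "g (real k1) < Wr/2"
      using order_tendstoD(2)[OF lim1, of "Wr/2"] W0 by (auto dest: eventually_happens)
    obtain k2 where k2: "measure lebesgue {x\<in>\<Omega>. f x \<le> - real k2} < Wr/2"
      using order_tendstoD(2)[OF lim2, of "Wr/2"] W0 by (auto dest: eventually_happens)
    define S where "S = {l. 2 * g l \<le> Wr}"
    have "real k1 \<in> S" unfolding S_def using k1 by simp
    then have Sne: "S \<noteq> {}" by auto
    have Sbdd: "bdd_below S"
    proof (rule bdd_belowI)
      fix l assume "l \<in> S"
      then have l: "2 * g l \<le> Wr" unfolding S_def by simp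
      show "- real k2 \<le> l"
      proof (rule ccontr)
        assume "\<not> - real k2 \<le> l"
        then have "g (- real k2) \<le> g l" using gmono by simp
        moreover have "g (- real k2) > Wr/2" using k2 compl[of "- real k2"] by simp
        ultimately show False using l by simp
      qed
    qed
    define m where "m = Inf S"
    show ?thesis
    proof (intro exI allI impI conjI)
      fix l :: real assume l: "0 < l"
      obtain \<mu> where \<mu>: "\<mu> \<in> S" "\<mu> < m + l" using cInf_lessD[OF Sne, of "m + l"] l unfolding m_def by auto
      have "g (m + l) \<le> g \<mu>" using gmono \<mu> by simp
      then have "2 * g (m + l) \<le> Wr" using \<mu> unfolding S_def by simp
      then show "2 * emeasure lebesgue {x\<in>\<Omega>. m + l < f x} \<le> emeasure lebesgue \<Omega>"
        using m1 by (intro key) (auto simp: g_def)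
      have "m - l \<notin> S"
      proof
        assume "m - l \<in> S"
        then have "m \<le> m - l" unfolding m_def by (rule cInf_lower[OF _ Sbdd])
        then show False using l by simp
      qed
      then have gl: "2 * g (m - l) > Wr" unfolding S_def by simp
      have eqs: "{x\<in>\<Omega>. - m + l < - f x} \<subseteq> {x\<in>\<Omega>. f x \<le> m - l}" by auto
      have "measure lebesgue {x\<in>\<Omega>. - m + l < - f x} \<le> measure lebesgue {x\<in>\<Omega>. f x \<le> m - l}"
        using eqs m2 m3 by (intro measure_mono_fmeasurable fmS) auto
      then have "2 * measure lebesgue {x\<in>\<Omega>. - m + l < - f x} \<le> Wr"
        using compl[of "m - l"] gl by simp
      then show "2 * emeasure lebesgue {x\<in>\<Omega>. - m + l < - f x} \<le> emeasure lebesgue \<Omega>"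
        using m2 by (intro key) auto
    qed
  qed
qed



lemma setnn_restrict:
  fixes \<Omega> :: "(real^'n) set"
  assumes "\<Omega> \<in> sets lebesgue"
  shows "(\<integral>\<^sup>+x\<in>\<Omega>. f x \<partial>lebesgue) = (\<integral>\<^sup>+x. f x \<partial>(lebesgue_on \<Omega>))"
  using assms by (simp add: nn_integral_restrict_space)

lemma pw_int:
  fixes g :: "real^'n \<Rightarrow> real"
  assumes \<Omega>m: "\<Omega> \<in> sets lebesgue" and gm: "g \<in> borel_measurable (lebesgue_on \<Omega>)" and K: "0 < K"
    and pw: "\<forall>x\<in>\<Omega>. ennreal (g x) \<le> ennreal K * F x" and M: "(\<integral>\<^sup>+x\<in>\<Omega>. F x \<partial>lebesgue) \<le> 1"
  shows "(\<integral>\<^sup>+x\<in>\<Omega>. ennreal (g x) \<partial>lebesgue) \<le> ennreal K"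
proof -
  define I where "I = (\<integral>\<^sup>+x. ennreal (g x) \<partial>(lebesgue_on \<Omega>))"
  have "ennreal (1/K) * I = (\<integral>\<^sup>+x. ennreal (1/K) * ennreal (g x) \<partial>(lebesgue_on \<Omega>))"
    unfolding I_def using gm by (subst nn_integral_cmult) auto
  also have "\<dots> \<le> (\<integral>\<^sup>+x. F x \<partial>(lebesgue_on \<Omega>))"
  proof (rule nn_integral_mono)
    fix x assume "x \<in> space (lebesgue_on \<Omega>)"
    then have x: "x \<in> \<Omega>" by simp
    have "ennreal (1/K) * ennreal (g x) \<le> ennreal (1/K) * (ennreal K * F x)"
      using pw x by (intro mult_left_mono) auto
    also have "\<dots> = F x" using K by (simp add: mult.assoc[symmetric] ennreal_mult[symmetric])
    finally show "ennreal (1/K) * ennreal (g x) \<le> F x" .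
  qed
  also have "\<dots> \<le> 1" using M setnn_restrict[OF \<Omega>m] by simp
  finally have 1: "ennreal (1/K) * I \<le> 1" .
  have "I = ennreal K * (ennreal (1/K) * I)" using K by (simp add: mult.assoc[symmetric] ennreal_mult[symmetric])
  also have "\<dots> \<le> ennreal K * 1" using 1 by (intro mult_left_mono) auto
  finally show ?thesis unfolding I_def using setnn_restrict[OF \<Omega>m] by simp
qed

lemma powr_sum_le:
  fixes a b q :: real
  assumes "0 \<le> a" "0 \<le> b" "0 < q"
  shows "(a + b) powr q \<le> 2 powr q * (a powr q + b powr q)"
proof -
  have "(a + b) powr q \<le> (2 * max a b) powr q" using assms by (intro powr_mono2) auto
  also have "\<dots> = 2 powr q * (max a b) powr q" using assms by (simp add: powr_mult)
  also have "(max a b) powr q \<le> a powr q + b powr q" using assms by (simp add: max_def)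
  finally show ?thesis by simp
qed

lemma avg_bound:
  fixes w :: "real^'n \<Rightarrow> real"
  assumes \<Omega>m: "\<Omega> \<in> sets lebesgue" and fin: "emeasure lebesgue \<Omega> < \<infinity>" and pos: "0 < emeasure lebesgue \<Omega>"
    and wm: "w \<in> borel_measurable (lebesgue_on \<Omega>)" and q: "1 < q" and K: "0 < K"
    and I: "(\<integral>\<^sup>+x\<in>\<Omega>. ennreal (\<bar>w x - m\<bar> powr q) \<partial>lebesgue) \<le> ennreal K"
  shows "(\<integral>\<^sup>+x\<in>\<Omega>. ennreal (\<bar>w x - avg \<Omega> w\<bar> powr q) \<partial>lebesgue) \<le> ennreal (2 powr q * (2 * K))"
proof -
  define N where "N = lebesgue_on \<Omega>"
  have spN: "space N = \<Omega>" unfolding N_def by simp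
  define W where "W = measure lebesgue \<Omega>"
  have eW: "emeasure lebesgue \<Omega> = ennreal W" unfolding W_def using fin
    by (simp add: emeasure_eq_ennreal_measure less_top)
  have W0: "W > 0" using pos eW by (simp add: ennreal_less_zero_iff) 
  have eN: "emeasure N (space N) = ennreal W" unfolding spN N_def using \<Omega>m eW
    by (simp add: emeasure_restrict_space)
  have mN: "measure N (space N) = W" using eN W0 by (simp add: measure_def)
  define A where "A = (K / W) powr (1/q)"
  have A0: "A > 0" unfolding A_def using K W0 by simp
  have Aq: "A powr q = K / W" unfolding A_def using K W0 q by (simp add: powr_powr)
  define h where "h x = \<bar>w x - m\<bar>" for x
  have hm: "h \<in> borel_measurable N" unfolding h_def N_def using wm by measurable
  have IN: "(\<integral>\<^sup>+x. ennreal (h x powr q) \<partial>N) \<le> ennreal K"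
    using I setnn_restrict[OF \<Omega>m] unfolding N_def h_def by simp
  define c1 where "c1 = A * W / (q * K)"
  define c2 where "c2 = A * (1 - 1/q)"
  have c10: "c1 \<ge> 0" and c20: "c2 \<ge> 0" unfolding c1_def c2_def using A0 W0 K q by auto
  have young: "h x \<le> c1 * h x powr q + c2" for x
  proof -
    define a where "a = h x / A"
    have a0: "a \<ge> 0" unfolding a_def h_def using A0 by simp
    have "a * 1 \<le> a powr q / q + 1 powr (q/(q-1)) / (q/(q-1))"
      using q a0 by (intro Youngs_inequality) (auto simp: field_simps)
    then have "a \<le> a powr q / q + (1 - 1/q)" using q by (simp add: field_simps)
    then have "A * a \<le> A * (a powr q / q + (1 - 1/q))" using A0 by (intro mult_left_mono) auto
    also have "A * a = h x" unfolding a_def using A0 by simp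
    also have "a powr q = h x powr q / A powr q" unfolding a_def using A0 h_def by (simp add: powr_divide)
    finally show ?thesis unfolding c1_def c2_def Aq using K W0 q A0 by (simp add: field_simps)
  qed
  have J: "(\<integral>\<^sup>+x. ennreal (h x) \<partial>N) \<le> ennreal (A * W)"
  proof -
    have "(\<integral>\<^sup>+x. ennreal (h x) \<partial>N) \<le> (\<integral>\<^sup>+x. ennreal c1 * ennreal (h x powr q) + ennreal c2 \<partial>N)"
    proof (rule nn_integral_mono)
      fix x
      have "ennreal (h x) \<le> ennreal (c1 * h x powr q + c2)" using young by (rule ennreal_leI)
      also have "\<dots> = ennreal c1 * ennreal (h x powr q) + ennreal c2"
        using c10 c20 by (simp add: ennreal_plus ennreal_mult)
      finally show "ennreal (h x) \<le> ennreal c1 * ennreal (h x powr q) + ennreal c2" .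
    qed
    also have "\<dots> = ennreal c1 * (\<integral>\<^sup>+x. ennreal (h x powr q) \<partial>N) + ennreal c2 * emeasure N (space N)"
      using hm by (simp add: nn_integral_add nn_integral_cmult)
    also have "\<dots> \<le> ennreal c1 * ennreal K + ennreal c2 * ennreal W"
      using IN eN by (intro add_mono mult_left_mono) auto
    also have "\<dots> = ennreal (c1 * K + c2 * W)" using c10 c20 K W0 by (simp add: ennreal_plus ennreal_mult)
    also have "c1 * K + c2 * W = A * W" unfolding c1_def c2_def using K q by (simp add: field_simps)
    finally show ?thesis .
  qed
  have int1: "integrable N (\<lambda>x. w x - m)"
  proof (rule integrableI_bounded)
    show "(\<lambda>x. w x - m) \<in> borel_measurable N" unfolding N_def using wm by measurable
    show "(\<integral>\<^sup>+x. ennreal (norm (w x - m)) \<partial>N) < \<infinity>" using J unfolding h_def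
      by (simp add: le_less_trans[OF _ ennreal_less_top])
  qed
  have int2: "integrable N (\<lambda>x. m)"
  proof (rule integrableI_bounded)
    show "(\<integral>\<^sup>+x. ennreal (norm m) \<partial>N) < \<infinity>" using eN by (simp add: ennreal_mult_less_top)
  qed simp
  have intw: "integrable N w" using Bochner_Integration.integrable_add[OF int1 int2] by simp
  have avgeq: "avg \<Omega> w = integral\<^sup>L N w / W"
    unfolding avg_def W_def N_def set_lebesgue_integral_def using \<Omega>m
    by (simp add: integral_restrict_space)
  have "integral\<^sup>L N w = integral\<^sup>L N (\<lambda>x. w x - m) + m * W"
    using Bochner_Integration.integral_add[OF int1 int2] mN by simp
  then have avgm: "avg \<Omega> w - m = integral\<^sup>L N (\<lambda>x. w x - m) / W" unfolding avgeq using W0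
    by (simp add: field_simps)
  have absb:  "\<bar>integral\<^sup>L N (\<lambda>x. w x - m)\<bar> \<le> A * W"
  proof -
    have "\<bar>integral\<^sup>L N (\<lambda>x. w x - m)\<bar> \<le> integral\<^sup>L N (\<lambda>x. \<bar>w x - m\<bar>)"
      by (rule integral_abs_bound)
    also have "\<dots> = enn2real (\<integral>\<^sup>+x. ennreal (h x) \<partial>N)" unfolding h_def
      using hm unfolding h_def by (subst integral_eq_nn_integral) auto
    also have "\<dots> \<le> A * W" using J A0 W0 by (simp add: enn2real_leI)
    finally show ?thesis .
  qed
  have am: "\<bar>avg \<Omega> w - m\<bar> \<le> A"
  proof -
    have "\<bar>avg \<Omega> w - m\<bar> = \<bar>integral\<^sup>L N (\<lambda>x. w x - m)\<bar> / W" unfolding avgm using W0 by (simp add: abs_divide)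
    also have "\<dots> \<le> A * W / W" using absb W0 by (intro divide_right_mono) auto
    finally show ?thesis using W0 by simp
  qed
  have "(\<integral>\<^sup>+x. ennreal (\<bar>w x - avg \<Omega> w\<bar> powr q) \<partial>N) \<le> (\<integral>\<^sup>+x. ennreal (2 powr q) * ennreal (h x powr q) + ennreal (2 powr q * A powr q) \<partial>N)"
  proof (rule nn_integral_mono)
    fix x
    have "\<bar>w x - avg \<Omega> w\<bar> \<le> h x + A" unfolding h_def using am by simp
    then have "\<bar>w x - avg \<Omega> w\<bar> powr q \<le> (h x + A) powr q" using q by (intro powr_mono2) auto
    also have "\<dots> \<le> 2 powr q * (h x powr q + A powr q)" using A0 q by (intro powr_sum_le) (auto simp: h_def)
    finally have "ennreal (\<bar>w x - avg \<Omega> w\<bar> powr q) \<le> ennreal (2 powr q * h x powr q + 2 powr q * A powr q)"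
      by (intro ennreal_leI) (simp add: algebra_simps)
    also have "\<dots> = ennreal (2 powr q) * ennreal (h x powr q) + ennreal (2 powr q * A powr q)"
      by (simp add: ennreal_plus ennreal_mult)
    finally show "ennreal (\<bar>w x - avg \<Omega> w\<bar> powr q) \<le> ennreal (2 powr q) * ennreal (h x powr q) + ennreal (2 powr q * A powr q)" .
  qed
  also have "\<dots> = ennreal (2 powr q) * (\<integral>\<^sup>+x. ennreal (h x powr q) \<partial>N) + ennreal (2 powr q * A powr q) * emeasure N (space N)"
    using hm by (simp add: nn_integral_add nn_integral_cmult)
  also have "\<dots> \<le> ennreal (2 powr q) * ennreal K + ennreal (2 powr q * A powr q) * ennreal W"
    using IN eN by (intro add_mono mult_left_mono) auto
  also have "\<dots> = ennreal (2 powr q * (2 * K))" unfolding Aq using K W0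
    by (simp add: ennreal_plus[symmetric] ennreal_mult[symmetric] field_simps)
  finally show ?thesis using setnn_restrict[OF \<Omega>m] unfolding N_def by simp
qed



lemma K0c_pos:
  assumes yf: "young_function \<phi>" and b: "0 < \<beta>" and n: "1 \<le> n" and Cu: "0 < Cu"
    and ut: "\<forall>x>0. \<forall>\<mu>\<ge>1. \<phi> (\<mu> * x) \<le> Cu * \<mu> powr (real n / \<beta>) * \<phi> x" and th: "0 < \<theta>"
  shows "0 < K0c \<phi> n \<beta> \<theta> Cu"
proof -
  have T1: "1 \<le> Tc \<phi> n \<beta> \<theta> Cu" unfolding Tc_def by simp
  have "0 < psiF \<phi> n \<beta> (Tc \<phi> n \<beta> \<theta> Cu)" using psi_props(1)[OF yf b n Cu ut] T1 by simp
  then show ?thesis unfolding K0c_def using Cu T1 th by simp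
qed

lemma Lp_from_int:
  fixes g :: "real^'n \<Rightarrow> real"
  assumes \<Omega>m: "\<Omega> \<in> sets lebesgue" and gm: "g \<in> borel_measurable (lebesgue_on \<Omega>)"
    and s: "0 < s" and q: "0 < q" and B: "0 \<le> B"
    and I: "(\<integral>\<^sup>+x\<in>\<Omega>. ennreal (\<bar>g x / s\<bar> powr q) \<partial>lebesgue) \<le> ennreal B"
  shows "Lp_norm q \<Omega> g \<le> ennreal (B powr (1/q)) * ennreal s"
proof -
  define I where "I = (\<integral>\<^sup>+x\<in>\<Omega>. ennreal (\<bar>g x\<bar> powr q) \<partial>lebesgue)"
  have "I = (\<integral>\<^sup>+x. ennreal (s powr q) * ennreal (\<bar>g x / s\<bar> powr q) \<partial>(lebesgue_on \<Omega>))"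
    unfolding I_def setnn_restrict[OF \<Omega>m]
  proof (intro nn_integral_cong)
    fix x
    have "\<bar>g x\<bar> powr q = s powr q * \<bar>g x / s\<bar> powr q" using s
      by (simp add: abs_divide powr_divide)
    then show "ennreal (\<bar>g x\<bar> powr q) = ennreal (s powr q) * ennreal (\<bar>g x / s\<bar> powr q)"
      by (simp add: ennreal_mult)
  qed
  also have "\<dots> = ennreal (s powr q) * (\<integral>\<^sup>+x. ennreal (\<bar>g x / s\<bar> powr q) \<partial>(lebesgue_on \<Omega>))"
    using gm by (subst nn_integral_cmult) auto
  also have "\<dots> \<le> ennreal (s powr q) * ennreal B"
    using I setnn_restrict[OF \<Omega>m] by (intro mult_left_mono) auto
  also have "\<dots> = ennreal (s powr q * B)" using B by (simp add: ennreal_mult)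
  finally have IB: "I \<le> ennreal (s powr q * B)" .
  then have If: "I \<noteq> \<infinity>" by (auto simp: top_unique)
  have "enn2real I \<le> s powr q * B" using IB B s by (simp add: enn2real_leI)
  then have "enn2real I powr (1/q) \<le> (s powr q * B) powr (1/q)" using q by (intro powr_mono2) auto
  also have "\<dots> = s * B powr (1/q)" using s B q by (simp add: powr_mult powr_powr)
  finally have "ennreal (enn2real I powr (1/q)) \<le> ennreal (B powr (1/q)) * ennreal s"
    using s B by (simp add: ennreal_mult[symmetric] ennreal_leI mult.commute)
  then show ?thesis unfolding Lp_norm_def Let_def using If unfolding I_def by simp
qed

lemma Inf_step:
  assumes C: "0 < C" and H: "\<forall>s>0. besov_modular \<alpha> \<phi> \<Omega> u s \<le> 1 \<longrightarrow> X \<le> ennreal C * ennreal s"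
  shows "X \<le> ennreal C * besov_norm \<alpha> \<phi> \<Omega> u"
proof -
  define Y where "Y = X * ennreal (1/C)"
  have "Y \<le> besov_norm \<alpha> \<phi> \<Omega> u" unfolding besov_norm_def
  proof (rule Inf_greatest)
    fix z assume "z \<in> {ennreal s |s. 0 < s \<and> besov_modular \<alpha> \<phi> \<Omega> u s \<le> 1}"
    then obtain s where s: "z = ennreal s" "0 < s" "besov_modular \<alpha> \<phi> \<Omega> u s \<le> 1" by auto
    have "Y \<le> ennreal C * ennreal s * ennreal (1/C)" unfolding Y_def using H s by (intro mult_right_mono) auto
    also have "\<dots> = ennreal s" using C s by (simp add: ennreal_mult[symmetric])
    finally show "Y \<le> z" using s by simp
  qed
  moreover have "X = ennreal C * Y" unfolding Y_def using C
    by (simp add: mult.commute mult.left_commute ennreal_mult[symmetric])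
  ultimately show ?thesis by (simp add: mult_left_mono)
qed

lemma open_pos:
  fixes \<Omega> :: "(real^'n) set"
  assumes "open \<Omega>" "\<Omega> \<noteq> {}"
  shows "0 < emeasure lebesgue \<Omega>"
proof -
  obtain x where x: "x \<in> \<Omega>" using assms by auto
  obtain e where e: "0 < e" "ball x e \<subseteq> \<Omega>" using assms(1) x openE by blast
  have "0 < emeasure lebesgue (ball x e)" using e(1)
    by (simp add: emeasure_ball)
  also have "\<dots> \<le> emeasure lebesgue \<Omega>" using e assms by (intro emeasure_mono) auto
  finally show ?thesis .
qed

lemma reg_bounded:
  fixes \<Omega> :: "(real^'n) set"
  assumes "globally_regular \<theta> \<Omega>" "bounded \<Omega>"
  shows "\<forall>x\<in>\<Omega>. \<forall>r>0. ennreal (\<theta> * r ^ CARD('n)) \<le> emeasure lebesgue (ball x r \<inter> \<Omega>) \<or> \<Omega> \<subseteq> ball x r"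
proof (intro ballI allI impI)
  fix x r assume x: "x \<in> \<Omega>" and r: "(0::real) < r"
  show "ennreal (\<theta> * r ^ CARD('n)) \<le> emeasure lebesgue (ball x r \<inter> \<Omega>) \<or> \<Omega> \<subseteq> ball x r"
  proof (cases "r < 2 * diameter \<Omega>")
    case True then show ?thesis using assms x r unfolding globally_regular_def by auto
  next
    case False
    have "\<Omega> \<subseteq> ball x r"
    proof
      fix y assume "y \<in> \<Omega>"
      then have "dist x y \<le> diameter \<Omega>" using diameter_bounded_bound[OF assms(2) x] by simp
      then show "y \<in> ball x r" using False r by simp
    qed
    then show ?thesis by simp
  qed
qed

lemma reg_unbounded:
  fixes \<Omega> :: "(real^'n) set"
  assumes "globally_regular \<theta> \<Omega>" "\<not> bounded \<Omega>"
  shows "\<forall>x\<in>\<Omega>. \<forall>r>0. ennreal (\<theta> * r ^ CARD('n)) \<le> emeasure lebesgue (ball x r \<inter> \<Omega>) \<or> \<Omega> \<subseteq> ball x r"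
  using assms unfolding globally_regular_def by auto

lemma avg_scale:
  fixes u :: "real^'n \<Rightarrow> real"
  shows "avg \<Omega> (\<lambda>x. u x / s) = avg \<Omega> u / s"
proof -
  have "(\<integral>x\<in>\<Omega>. u x / s \<partial>lebesgue) = (\<integral>x\<in>\<Omega>. u x \<partial>lebesgue) / s"
    unfolding set_lebesgue_integral_def
    using integral_divide_zero[of lebesgue "\<lambda>x. indicator \<Omega> x *\<^sub>R u x" s] by simp
  then show ?thesis unfolding avg_def by simp
qed



theorem lemma3p2:
  fixes \<phi> :: "real \<Rightarrow> real" and \<alpha> \<theta> :: real
  assumes "CARD('n::finite) \<ge> 2"
    and "- real CARD('n) < \<alpha>" and "\<alpha> < 0"
    and "young_function \<phi>"
    and "Lambda_lower CARD('n) \<phi> \<alpha> < \<infinity>"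
    and "Lambda_upper CARD('n) \<phi> \<alpha> < \<infinity>"
    and "0 < \<theta>" and "\<theta> < 1"
  shows
    "(\<exists>C>0. \<forall>(\<Omega>::(real^'n) set) u.
        domain \<Omega> \<and> bounded \<Omega> \<and> globally_regular \<theta> \<Omega> \<and> u \<in> besov_space \<alpha> \<phi> \<Omega> \<longrightarrow>
        Lp_norm (real CARD('n) / \<bar>\<alpha>\<bar>) \<Omega> (\<lambda>x. u x - avg \<Omega> u)
          \<le> ennreal C * besov_norm \<alpha> \<phi> \<Omega> u)
   \<and> (\<exists>C>0. \<forall>(\<Omega>::(real^'n) set) u.
        domain \<Omega> \<and> \<not> bounded \<Omega> \<and> globally_regular \<theta> \<Omega> \<and> u \<in> besov_space \<alpha> \<phi> \<Omega> \<and>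
        (\<forall>a>0. emeasure lebesgue {x\<in>\<Omega>. \<bar>u x\<bar> > a} < \<infinity>) \<longrightarrow>
        Lp_norm (real CARD('n) / \<bar>\<alpha>\<bar>) \<Omega> u \<le> ennreal C * besov_norm \<alpha> \<phi> \<Omega> u)"
proof -
  note yf = assms(4) and th = assms(7)
  define \<beta> where "\<beta> = \<bar>\<alpha>\<bar>"
  have b: "0 < \<beta>" and ab: "- \<alpha> = \<beta>" unfolding \<beta>_def using assms(3) by auto
  have bnlt: "\<beta> < real CARD('n)" using assms(2) ab by simp
  have bn: "\<beta> \<le> real CARD('n)" using bnlt by simp
  have n1: "1 \<le> CARD('n)" by (simp add: Suc_leI)
  define q where "q = real CARD('n) / \<beta>"
  have q1: "1 < q" unfolding q_def using b bnlt by simp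
  define Cu where "Cu = max 1 (2 ^ (CARD('n)+1) * enn2real (Lambda_upper CARD('n) \<phi> \<alpha>))"
  have Cu: "0 < Cu" unfolding Cu_def by simp
  have ut: "\<forall>x>0. \<forall>\<mu>\<ge>1. \<phi> (\<mu> * x) \<le> Cu * \<mu> powr (real CARD('n) / \<beta>) * \<phi> x"
  proof (intro allI impI)
    fix x \<mu> :: real assume x: "0 < x" and mu: "1 \<le> \<mu>"
    have "\<phi> (\<mu> * x) \<le> 2 ^ (CARD('n)+1) * enn2real (Lambda_upper CARD('n) \<phi> \<alpha>) * \<mu> powr (real CARD('n) / - \<alpha>) * \<phi> x"
      by (rule upper_type[OF yf assms(3) assms(6) x mu])
    also have "\<dots> \<le> Cu * \<mu> powr (real CARD('n) / \<beta>) * \<phi> x"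
      unfolding ab Cu_def using phi_nonneg[OF yf, of x] x
      by (intro mult_right_mono) auto
    finally show "\<phi> (\<mu> * x) \<le> Cu * \<mu> powr (real CARD('n) / \<beta>) * \<phi> x" .
  qed
  have ut': "\<forall>x>0. \<forall>\<mu>\<ge>1. \<phi> (\<mu> * x) \<le> Cu * \<mu> powr (real CARD('n) / \<beta>) * \<phi> x" using ut .
  define K0 where "K0 = K0c \<phi> CARD('n) \<beta> \<theta> Cu"
  have K0: "0 < K0" unfolding K0_def by (rule K0c_pos[OF yf b n1 Cu ut th])
  have modM: "(\<integral>\<^sup>+x\<in>\<Omega>. Fw \<beta> \<phi> \<Omega> (\<lambda>x. u x / s) x \<partial>lebesgue) = besov_modular \<alpha> \<phi> \<Omega> u s"
    if "0 < s" for \<Omega> :: "(real^'n) set" and u s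
    unfolding modular_eq[OF that] Fw_def ab ..
  show ?thesis
  proof (rule conjI)
    show "\<exists>C>0. \<forall>(\<Omega>::(real^'n) set) u.
        domain \<Omega> \<and> bounded \<Omega> \<and> globally_regular \<theta> \<Omega> \<and> u \<in> besov_space \<alpha> \<phi> \<Omega> \<longrightarrow>
        Lp_norm (real CARD('n) / \<bar>\<alpha>\<bar>) \<Omega> (\<lambda>x. u x - avg \<Omega> u)
          \<le> ennreal C * besov_norm \<alpha> \<phi> \<Omega> u"
    proof (intro exI conjI allI impI)
      show "0 < (2 powr q * (2 * K0)) powr (1/q)" using K0 by simp
      fix \<Omega> :: "(real^'n) set" and u
      assume H: "domain \<Omega> \<and> bounded \<Omega> \<and> globally_regular \<theta> \<Omega> \<and> u \<in> besov_space \<alpha> \<phi> \<Omega>"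
      have op: "open \<Omega>" and ne: "\<Omega> \<noteq> {}" using H unfolding domain_def by auto
      have um: "u \<in> borel_measurable (lebesgue_on \<Omega>)" using H unfolding besov_space_def by auto
      have \<Omega>m: "\<Omega> \<in> sets lebesgue" using op by simp
      have fin: "emeasure lebesgue \<Omega> < \<infinity>" using emeasure_bounded_finite[of \<Omega>] H op by simp
      have pos: "0 < emeasure lebesgue \<Omega>" by (rule open_pos[OF op ne])
      have reg: "\<forall>x\<in>\<Omega>. \<forall>r>0. ennreal (\<theta> * r ^ CARD('n)) \<le> emeasure lebesgue (ball x r \<inter> \<Omega>) \<or> \<Omega> \<subseteq> ball x r"
        using reg_bounded H by blast
      define W where "W = measure lebesgue \<Omega>"
      have eW: "emeasure lebesgue \<Omega> = ennreal W" unfolding W_def using fin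
        by (simp add: emeasure_eq_ennreal_measure less_top)
      have W0: "0 \<le> W" unfolding W_def by simp
      show "Lp_norm (real CARD('n) / \<bar>\<alpha>\<bar>) \<Omega> (\<lambda>x. u x - avg \<Omega> u) \<le> ennreal ((2 powr q * (2 * K0)) powr (1/q)) * besov_norm \<alpha> \<phi> \<Omega> u"
      proof (rule Inf_step)
        show "0 < (2 powr q * (2 * K0)) powr (1/q)" using K0 by simp
        show "\<forall>s>0. besov_modular \<alpha> \<phi> \<Omega> u s \<le> 1 \<longrightarrow> Lp_norm (real CARD('n) / \<bar>\<alpha>\<bar>) \<Omega> (\<lambda>x. u x - avg \<Omega> u) \<le> ennreal ((2 powr q * (2 * K0)) powr (1/q)) * ennreal s"
        proof (intro allI impI)
          fix s :: real assume s: "0 < s" and ms: "besov_modular \<alpha> \<phi> \<Omega> u s \<le> 1"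
          define w where "w x = u x / s" for x
          have wm: "w \<in> borel_measurable (lebesgue_on \<Omega>)" unfolding w_def using um by measurable
          have M: "(\<integral>\<^sup>+x\<in>\<Omega>. Fw \<beta> \<phi> \<Omega> w x \<partial>lebesgue) \<le> 1"
            using modM[OF s, of \<Omega> u] ms unfolding w_def[abs_def] by simp
          obtain m where med: "\<forall>l>0. 2 * emeasure lebesgue {x\<in>\<Omega>. m + l < w x} \<le> emeasure lebesgue \<Omega>
              \<and> 2 * emeasure lebesgue {x\<in>\<Omega>. - m + l < - w x} \<le> emeasure lebesgue \<Omega>"
            using median[OF \<Omega>m fin wm] by blast
          have sub: "emeasure lebesgue {x\<in>\<Omega>. P x} \<le> ennreal W" if "{x\<in>\<Omega>. P x} \<in> sets lebesgue" for P
            using emeasure_mono[of "{x\<in>\<Omega>. P x}" \<Omega> lebesgue] \<Omega>m eW by auto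
          have C1: "\<forall>x\<in>\<Omega>. m < 1 * w x \<longrightarrow> ennreal ((1 * w x - m) powr (real CARD('n) / \<beta>))
              \<le> ennreal (K0c \<phi> CARD('n) \<beta> \<theta> Cu) * Fw \<beta> \<phi> \<Omega> w x"
          proof (rule core_w[OF yf b bn Cu ut th \<Omega>m reg pos wm _ W0 _ _ M])
            show "\<forall>l>0. emeasure lebesgue {x \<in> \<Omega>. m + l < 1 * w x} \<le> ennreal W"
              using sub lev_meas[OF \<Omega>m wm] by simp
            show "\<forall>l>0. \<forall>x\<in>\<Omega>. \<forall>r>0. \<Omega> \<subseteq> ball x r \<longrightarrow> 2 * emeasure lebesgue {x \<in> \<Omega>. m + l < 1 * w x} \<le> emeasure lebesgue \<Omega>"
              using med by simp
          qed simp
          have wm': "(\<lambda>x. - w x) \<in> borel_measurable (lebesgue_on \<Omega>)" using wm by measurable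
          have C2: "\<forall>x\<in>\<Omega>. - m < -1 * w x \<longrightarrow> ennreal ((-1 * w x - - m) powr (real CARD('n) / \<beta>))
              \<le> ennreal (K0c \<phi> CARD('n) \<beta> \<theta> Cu) * Fw \<beta> \<phi> \<Omega> w x"
          proof (rule core_w[OF yf b bn Cu ut th \<Omega>m reg pos wm _ W0 _ _ M])
            show "\<forall>l>0. emeasure lebesgue {x \<in> \<Omega>. - m + l < -1 * w x} \<le> ennreal W"
              using sub lev_meas[OF \<Omega>m wm'] by simp
            show "\<forall>l>0. \<forall>x\<in>\<Omega>. \<forall>r>0. \<Omega> \<subseteq> ball x r \<longrightarrow> 2 * emeasure lebesgue {x \<in> \<Omega>. - m + l < -1 * w x} \<le> emeasure lebesgue \<Omega>"
              using med by simp
          qed simp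
          have pw: "\<forall>x\<in>\<Omega>. ennreal (\<bar>w x - m\<bar> powr q) \<le> ennreal K0 * Fw \<beta> \<phi> \<Omega> w x"
          proof
            fix x assume x: "x \<in> \<Omega>"
            consider "m < w x" | "w x < m" | "w x = m" by linarith
            then show "ennreal (\<bar>w x - m\<bar> powr q) \<le> ennreal K0 * Fw \<beta> \<phi> \<Omega> w x"
            proof cases
              case 1 then show ?thesis using C1 x unfolding K0_def q_def by simp
            next
              case 2
              then have "\<bar>w x - m\<bar> = -1 * w x - - m" by simp
              then show ?thesis using C2 x 2 unfolding K0_def q_def by simp
            qed simp
          qed
          have I1: "(\<integral>\<^sup>+x\<in>\<Omega>. ennreal (\<bar>w x - m\<bar> powr q) \<partial>lebesgue) \<le> ennreal K0"
            by (rule pw_int[OF \<Omega>m _ K0 pw M]) (use wm in measurable)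
          have I2: "(\<integral>\<^sup>+x\<in>\<Omega>. ennreal (\<bar>w x - avg \<Omega> w\<bar> powr q) \<partial>lebesgue) \<le> ennreal (2 powr q * (2 * K0))"
            by (rule avg_bound[OF \<Omega>m fin pos wm q1 K0 I1])
          have eqg: "\<bar>(u x - avg \<Omega> u) / s\<bar> = \<bar>w x - avg \<Omega> w\<bar>" for x
            unfolding w_def[abs_def] avg_scale using s by (simp add: diff_divide_distrib)
          show "Lp_norm (real CARD('n) / \<bar>\<alpha>\<bar>) \<Omega> (\<lambda>x. u x - avg \<Omega> u) \<le> ennreal ((2 powr q * (2 * K0)) powr (1/q)) * ennreal s"
            unfolding \<beta>_def[symmetric] q_def[symmetric]
          proof (rule Lp_from_int[OF \<Omega>m _ s])
            show "(\<lambda>x. u x - avg \<Omega> u) \<in> borel_measurable (lebesgue_on \<Omega>)" using um by measurable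
            show "0 < q" using q1 by simp
            show "0 \<le> 2 powr q * (2 * K0)" using K0 by simp
            show "(\<integral>\<^sup>+x\<in>\<Omega>. ennreal (\<bar>(u x - avg \<Omega> u) / s\<bar> powr q) \<partial>lebesgue) \<le> ennreal (2 powr q * (2 * K0))"
              unfolding eqg by (rule I2)
          qed
        qed
      qed
    qed
  next
    show "\<exists>C>0. \<forall>(\<Omega>::(real^'n) set) u.
        domain \<Omega> \<and> \<not> bounded \<Omega> \<and> globally_regular \<theta> \<Omega> \<and> u \<in> besov_space \<alpha> \<phi> \<Omega> \<and>
        (\<forall>a>0. emeasure lebesgue {x\<in>\<Omega>. \<bar>u x\<bar> > a} < \<infinity>) \<longrightarrow>
        Lp_norm (real CARD('n) / \<bar>\<alpha>\<bar>) \<Omega> u \<le> ennreal C * besov_norm \<alpha> \<phi> \<Omega> u"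
    proof (intro exI conjI allI impI)
      show "0 < (2 powr q * K0) powr (1/q)" using K0 by simp
      fix \<Omega> :: "(real^'n) set" and u
      assume H: "domain \<Omega> \<and> \<not> bounded \<Omega> \<and> globally_regular \<theta> \<Omega> \<and> u \<in> besov_space \<alpha> \<phi> \<Omega> \<and>
        (\<forall>a>0. emeasure lebesgue {x\<in>\<Omega>. \<bar>u x\<bar> > a} < \<infinity>)"
      have op: "open \<Omega>" and ne: "\<Omega> \<noteq> {}" using H unfolding domain_def by auto
      have um: "u \<in> borel_measurable (lebesgue_on \<Omega>)" using H unfolding besov_space_def by auto
      have hf: "\<forall>a>0. emeasure lebesgue {x\<in>\<Omega>. \<bar>u x\<bar> > a} < \<infinity>" using H by blast
      have \<Omega>m: "\<Omega> \<in> sets lebesgue" using op by simp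
      have pos: "0 < emeasure lebesgue \<Omega>" by (rule open_pos[OF op ne])
      have reg: "\<forall>x\<in>\<Omega>. \<forall>r>0. ennreal (\<theta> * r ^ CARD('n)) \<le> emeasure lebesgue (ball x r \<inter> \<Omega>) \<or> \<Omega> \<subseteq> ball x r"
        using reg_unbounded H by blast
      have notc: "\<not> \<Omega> \<subseteq> ball x r" for x r using H bounded_ball bounded_subset by blast
      have uam: "(\<lambda>x. \<bar>u x\<bar>) \<in> borel_measurable (lebesgue_on \<Omega>)" using um by measurable
      show "Lp_norm (real CARD('n) / \<bar>\<alpha>\<bar>) \<Omega> u \<le> ennreal ((2 powr q * K0) powr (1/q)) * besov_norm \<alpha> \<phi> \<Omega> u"
      proof (rule Inf_step)
        show "0 < (2 powr q * K0) powr (1/q)" using K0 by simp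
        show "\<forall>s>0. besov_modular \<alpha> \<phi> \<Omega> u s \<le> 1 \<longrightarrow> Lp_norm (real CARD('n) / \<bar>\<alpha>\<bar>) \<Omega> u \<le> ennreal ((2 powr q * K0) powr (1/q)) * ennreal s"
        proof (intro allI impI)
          fix s :: real assume s: "0 < s" and ms: "besov_modular \<alpha> \<phi> \<Omega> u s \<le> 1"
          define w where "w x = u x / s" for x
          have wm: "w \<in> borel_measurable (lebesgue_on \<Omega>)" unfolding w_def using um by measurable
          have M: "(\<integral>\<^sup>+x\<in>\<Omega>. Fw \<beta> \<phi> \<Omega> w x \<partial>lebesgue) \<le> 1"
            using modM[OF s, of \<Omega> u] ms unfolding w_def[abs_def] by simp
          have G: "ennreal ((\<sigma> * w x - c) powr q) \<le> ennreal K0 * Fw \<beta> \<phi> \<Omega> w x"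
            if \<sigma>: "\<sigma> = 1 \<or> \<sigma> = -1" and c: "0 < c" and x: "x \<in> \<Omega>" and cx: "c < \<sigma> * w x" for \<sigma> c x
          proof -
            define E where "E = {y\<in>\<Omega>. c * s < \<bar>u y\<bar>}"
            have Em: "E \<in> sets lebesgue" unfolding E_def by (rule lev_meas[OF \<Omega>m uam])
            have Ef: "emeasure lebesgue E < \<infinity>" unfolding E_def using hf c s by simp
            define A where "A = enn2real (emeasure lebesgue E)"
            have eA: "emeasure lebesgue E = ennreal A" unfolding A_def using Ef
              by (simp add: less_top ennreal_enn2real)
            have CC: "\<forall>x\<in>\<Omega>. c < \<sigma> * w x \<longrightarrow> ennreal ((\<sigma> * w x - c) powr (real CARD('n) / \<beta>))
              \<le> ennreal (K0c \<phi> CARD('n) \<beta> \<theta> Cu) * Fw \<beta> \<phi> \<Omega> w x"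
            proof (rule core_w[OF yf b bn Cu ut th \<Omega>m reg pos wm \<sigma> _ _ _ M])
              show "0 \<le> A" unfolding A_def by simp
              show "\<forall>l>0. emeasure lebesgue {x \<in> \<Omega>. c + l < \<sigma> * w x} \<le> ennreal A"
              proof (intro allI impI)
                fix l :: real assume l: "0 < l"
                have "{x \<in> \<Omega>. c + l < \<sigma> * w x} \<subseteq> E"
                proof
                  fix y assume y: "y \<in> {x \<in> \<Omega>. c + l < \<sigma> * w x}"
                  then have "c < \<bar>w y\<bar>" using \<sigma> l by auto
                  then have "c * s < \<bar>u y\<bar>" unfolding w_def using s by (simp add: abs_divide field_simps)
                  then show "y \<in> E" using y unfolding E_def by simp
                qed
                then show "emeasure lebesgue {x \<in> \<Omega>. c + l < \<sigma> * w x} \<le> ennreal A"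
                  using emeasure_mono[OF _ Em] eA by metis
              qed
              show "\<forall>l>0. \<forall>x\<in>\<Omega>. \<forall>r>0. \<Omega> \<subseteq> ball x r \<longrightarrow> 2 * emeasure lebesgue {x \<in> \<Omega>. c + l < \<sigma> * w x} \<le> emeasure lebesgue \<Omega>"
                using notc by blast
            qed
            then show ?thesis using x cx unfolding K0_def q_def by blast
          qed
          have pw: "\<forall>x\<in>\<Omega>. ennreal (\<bar>w x\<bar> powr q) \<le> ennreal (2 powr q * K0) * Fw \<beta> \<phi> \<Omega> w x"
          proof
            fix x assume x: "x \<in> \<Omega>"
            show "ennreal (\<bar>w x\<bar> powr q) \<le> ennreal (2 powr q * K0) * Fw \<beta> \<phi> \<Omega> w x"
            proof (cases "w x = 0")
              case True then show ?thesis by simp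
            next
              case False
              obtain \<sigma> where \<sigma>: "\<sigma> = 1 \<or> \<sigma> = -1" and sw: "\<sigma> * w x = \<bar>w x\<bar>"
                by (cases "0 \<le> w x") (auto intro: that[of 1] that[of "-1"])
              have c: "0 < \<bar>w x\<bar> / 2" using False by simp
              have "ennreal ((\<sigma> * w x - \<bar>w x\<bar> / 2) powr q) \<le> ennreal K0 * Fw \<beta> \<phi> \<Omega> w x"
                by (rule G[OF \<sigma> c x]) (use sw False in simp)
              then have 1: "ennreal ((\<bar>w x\<bar> / 2) powr q) \<le> ennreal K0 * Fw \<beta> \<phi> \<Omega> w x" using sw by simp
              have "\<bar>w x\<bar> powr q = 2 powr q * (\<bar>w x\<bar> / 2) powr q" by (simp add: powr_divide)
              then have "ennreal (\<bar>w x\<bar> powr q) = ennreal (2 powr q) * ennreal ((\<bar>w x\<bar> / 2) powr q)"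
                by (simp add: ennreal_mult)
              also have "\<dots> \<le> ennreal (2 powr q) * (ennreal K0 * Fw \<beta> \<phi> \<Omega> w x)"
                using 1 by (intro mult_left_mono) auto
              also have "\<dots> = ennreal (2 powr q * K0) * Fw \<beta> \<phi> \<Omega> w x"
                using K0 by (simp add: ennreal_mult mult.assoc)
              finally show ?thesis .
            qed
          qed
          have I1: "(\<integral>\<^sup>+x\<in>\<Omega>. ennreal (\<bar>w x\<bar> powr q) \<partial>lebesgue) \<le> ennreal (2 powr q * K0)"
            by (rule pw_int[OF \<Omega>m _ _ pw M]) (use wm K0 in \<open>measurable, simp\<close>)
          have eqg: "\<bar>u x / s\<bar> = \<bar>w x\<bar>" for x unfolding w_def ..
          show "Lp_norm (real CARD('n) / \<bar>\<alpha>\<bar>) \<Omega> u \<le> ennreal ((2 powr q * K0) powr (1/q)) * ennreal s"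
            unfolding \<beta>_def[symmetric] q_def[symmetric]
          proof (rule Lp_from_int[OF \<Omega>m um s])
            show "0 < q" using q1 by simp
            show "0 \<le> 2 powr q * K0" using K0 by simp
            show "(\<integral>\<^sup>+x\<in>\<Omega>. ennreal (\<bar>u x / s\<bar> powr q) \<partial>lebesgue) \<le> ennreal (2 powr q * K0)"
              unfolding eqg by (rule I1)
          qed
        qed
      qed
    qed
  qed
qed


end
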